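(* Let $p$ be a prime. Up to scaling by $\mathbb{F}_p^\times$, there are $p^5$ forms $\overline F=\sum_{i,j}a_{ij}X_0^{2-i}X_1^iY_0^{2-j}Y_1^j$ over $\mathbb{F}_p$ with $a_{00}=a_{01}=a_{10}=0$ and $a_{20}\ne 0$ (equivalently, the curve $\overline F=0$ in $\mathbb{P}^1\times\mathbb{P}^1$ is singular at $((1:0),(1:0))$ and does not contain the line $Y_1=0$). The numbers of these in Cases 1(i), 1(ii), 1(iii), 2, 3, 4, 5 are respectively $$s_{11}=p^3(p-1)/2,\ s_{12}=0,\ s_{13}=p(p-1)^2/2,\ s_2=0,\ s_3=p(p-1)/2,\ s_4=p(p-1),\ s_5=p.$$ Moreover, those in Cases 1(i), 1(iii) and 4 all satisfy $a_{02}\ne 0$, while those in Cases 3 and 5 all satisfy $a_{02}=0$.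
   Context: A $(2,2)$-form over $\mathbb{F}_p$ is a polynomial homogeneous of degree 2 in $(X_0,X_1)$ and of degree 2 in $(Y_0,Y_1)$, defining a curve in $\mathbb{P}^1\times\mathbb{P}^1$; a $(d_1,d_2)$-form is defined analogously. The cases are: Case 1: the form is irreducible over $\mathbb{F}_p$ but factors over $\mathbb{F}_{p^2}$ as a $(1,1)$-form times its Galois conjugate, so its curve is geometrically two rational curves; Cases 1(i), 1(ii), 1(iii): these two curves meet in a pair of $\mathbb{F}_p$-points, a pair of conjugate $\mathbb{F}_{p^2}$-points, or a single $\mathbb{F}_p$-point, respectively. Case 2: product of an irreducible $(2,0)$-form and an irreducible $(0,2)$-form. Case 3: an irreducible $(2,0)$-form times the square of a $(0,1)$-form, or an irreducible $(0,2)$-form times the square of a $(1,0)$-form. Case 4: the square of an irreducible $(1,1)$-form. Case 5: the square of a $(1,0)$-form times the square of a $(0,1)$-form. *)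

theory Defs
  imports Main "HOL-Computational_Algebra.Primes"
begin

text \<open>A (d1,d2)-form is encoded by its coefficient function f, where f i j is the
coefficient of X0^(d1-i) X1^i Y0^(d2-j) Y1^j; it vanishes for i > d1 or j > d2.\<close>

definition is_form :: "nat \<Rightarrow> nat \<Rightarrow> (nat \<Rightarrow> nat \<Rightarrow> 'a::zero) \<Rightarrow> bool" where
  "is_form d1 d2 f \<longleftrightarrow> (\<forall>i j. (d1 < i \<or> d2 < j) \<longrightarrow> f i j = 0)"

definition fmul :: "(nat \<Rightarrow> nat \<Rightarrow> 'a::comm_semiring_1) \<Rightarrow> (nat \<Rightarrow> nat \<Rightarrow> 'a) \<Rightarrow> nat \<Rightarrow> nat \<Rightarrow> 'a" where
  "fmul f g = (\<lambda>i j. \<Sum>i1\<le>i. \<Sum>j1\<le>j. f i1 j1 * g (i - i1) (j - j1))"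

definition fscale :: "'a::times \<Rightarrow> (nat \<Rightarrow> nat \<Rightarrow> 'a) \<Rightarrow> nat \<Rightarrow> nat \<Rightarrow> 'a" where
  "fscale c f = (\<lambda>i j. c * f i j)"

text \<open>Irreducibility of a (d1,d2)-form as a polynomial over the field: nonzero, not a unit
(nonconstant), and not a product of two nonconstant forms (every factor of a bihomogeneous
polynomial is bihomogeneous).\<close>
definition irred_form :: "nat \<Rightarrow> nat \<Rightarrow> (nat \<Rightarrow> nat \<Rightarrow> 'a::field) \<Rightarrow> bool" where
  "irred_form d1 d2 F \<longleftrightarrow> is_form d1 d2 F \<and> F \<noteq> (\<lambda>i j. 0) \<and> (d1, d2) \<noteq> (0, 0) \<and>
     \<not> (\<exists>e1 e2 G H. e1 \<le> d1 \<and> e2 \<le> d2 \<and> (e1, e2) \<noteq> (0, 0) \<and> (e1, e2) \<noteq> (d1, d2) \<and>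
          is_form e1 e2 G \<and> is_form (d1 - e1) (d2 - e2) H \<and> F = fmul G H)"

definition eval_form :: "nat \<Rightarrow> nat \<Rightarrow> (nat \<Rightarrow> nat \<Rightarrow> 'a::comm_ring_1) \<Rightarrow> 'a \<times> 'a \<Rightarrow> 'a \<times> 'a \<Rightarrow> 'a" where
  "eval_form d1 d2 f P Q = (\<Sum>i\<le>d1. \<Sum>j\<le>d2.
      f i j * fst P ^ (d1 - i) * snd P ^ i * fst Q ^ (d2 - j) * snd Q ^ j)"

text \<open>Points of P^1 over a field, normalised representatives (1:t) and (0:1).\<close>
definition P1 :: "('a::field \<times> 'a) set" where
  "P1 = {(1, t) | t. True} \<union> {(0, 1)}"

text \<open>Galois conjugate (Frobenius z \<mapsto> z^p on coefficients) of a form over F_{p^2}.\<close>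
definition gconj :: "nat \<Rightarrow> (nat \<Rightarrow> nat \<Rightarrow> 'K::field) \<Rightarrow> nat \<Rightarrow> nat \<Rightarrow> 'K" where
  "gconj p G = (\<lambda>i j. G i j ^ p)"

definition conj_factor :: "nat \<Rightarrow> ('k::field \<Rightarrow> 'K::field) \<Rightarrow> (nat \<Rightarrow> nat \<Rightarrow> 'k) \<Rightarrow> (nat \<Rightarrow> nat \<Rightarrow> 'K) \<Rightarrow> bool" where
  "conj_factor p emb F G \<longleftrightarrow> is_form 1 1 G \<and> (\<lambda>i j. emb (F i j)) = fmul G (gconj p G)"

definition conj_inter :: "nat \<Rightarrow> (nat \<Rightarrow> nat \<Rightarrow> 'K::field) \<Rightarrow> (('K \<times> 'K) \<times> ('K \<times> 'K)) set" where
  "conj_inter p G = {(P, Q). P \<in> P1 \<and> Q \<in> P1 \<and> eval_form 1 1 G P Q = 0 \<and>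
                              eval_form 1 1 (gconj p G) P Q = 0}"

definition rational_pt :: "('k \<Rightarrow> 'K) \<Rightarrow> ('K \<times> 'K) \<times> ('K \<times> 'K) \<Rightarrow> bool" where
  "rational_pt emb z \<longleftrightarrow> fst (fst z) \<in> range emb \<and> snd (fst z) \<in> range emb \<and>
                          fst (snd z) \<in> range emb \<and> snd (snd z) \<in> range emb"

definition case1i :: "nat \<Rightarrow> ('k::field \<Rightarrow> 'K::field) \<Rightarrow> (nat \<Rightarrow> nat \<Rightarrow> 'k) \<Rightarrow> bool" where
  "case1i p emb F \<longleftrightarrow> irred_form 2 2 F \<and> (\<exists>G. conj_factor p emb F G \<and>
     card (conj_inter p G) = 2 \<and> (\<forall>z\<in>conj_inter p G. rational_pt emb z))"

definition case1ii :: "nat \<Rightarrow> ('k::field \<Rightarrow> 'K::field) \<Rightarrow> (nat \<Rightarrow> nat \<Rightarrow> 'k) \<Rightarrow> bool" where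
  "case1ii p emb F \<longleftrightarrow> irred_form 2 2 F \<and> (\<exists>G. conj_factor p emb F G \<and>
     card (conj_inter p G) = 2 \<and> (\<forall>z\<in>conj_inter p G. \<not> rational_pt emb z))"

definition case1iii :: "nat \<Rightarrow> ('k::field \<Rightarrow> 'K::field) \<Rightarrow> (nat \<Rightarrow> nat \<Rightarrow> 'k) \<Rightarrow> bool" where
  "case1iii p emb F \<longleftrightarrow> irred_form 2 2 F \<and> (\<exists>G. conj_factor p emb F G \<and>
     card (conj_inter p G) = 1 \<and> (\<forall>z\<in>conj_inter p G. rational_pt emb z))"

definition case2 :: "(nat \<Rightarrow> nat \<Rightarrow> 'k::field) \<Rightarrow> bool" where
  "case2 F \<longleftrightarrow> (\<exists>A B. irred_form 2 0 A \<and> irred_form 0 2 B \<and> F = fmul A B)"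

definition case3 :: "(nat \<Rightarrow> nat \<Rightarrow> 'k::field) \<Rightarrow> bool" where
  "case3 F \<longleftrightarrow> (\<exists>c A L. c \<noteq> 0 \<and> L \<noteq> (\<lambda>i j. 0) \<and> F = fscale c (fmul A (fmul L L)) \<and>
      ((irred_form 2 0 A \<and> is_form 0 1 L) \<or> (irred_form 0 2 A \<and> is_form 1 0 L)))"

definition case4 :: "(nat \<Rightarrow> nat \<Rightarrow> 'k::field) \<Rightarrow> bool" where
  "case4 F \<longleftrightarrow> (\<exists>c G. c \<noteq> 0 \<and> irred_form 1 1 G \<and> F = fscale c (fmul G G))"

definition case5 :: "(nat \<Rightarrow> nat \<Rightarrow> 'k::field) \<Rightarrow> bool" where
  "case5 F \<longleftrightarrow> (\<exists>c L M. c \<noteq> 0 \<and> is_form 1 0 L \<and> L \<noteq> (\<lambda>i j. 0) \<and>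
      is_form 0 1 M \<and> M \<noteq> (\<lambda>i j. 0) \<and> F = fscale c (fmul (fmul L L) (fmul M M)))"

definition sing_forms :: "(nat \<Rightarrow> nat \<Rightarrow> 'k::field) set" where
  "sing_forms = {a. is_form 2 2 a \<and> a 0 0 = 0 \<and> a 0 1 = 0 \<and> a 1 0 = 0 \<and> a 2 0 \<noteq> 0}"

definition scale_classes :: "(nat \<Rightarrow> nat \<Rightarrow> 'k::field) set \<Rightarrow> (nat \<Rightarrow> nat \<Rightarrow> 'k) set set" where
  "scale_classes A = (\<lambda>a. {fscale c a | c. c \<noteq> 0}) ` A"

end

theory Submission
  imports Defs "HOL-Computational_Algebra.Computational_Algebra" "HOL-Number_Theory.Residues"
begin

lemma fin_field_pow_card:
  fixes x :: "'a::{field,finite}"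
  shows "x ^ card (UNIV :: 'a set) = x"
proof (cases "x = 0")
  case False
  have "x * (\<Prod>y\<in>UNIV-{0}. x * y) = x * x ^ (card (UNIV :: 'a set) - 1) * \<Prod>(UNIV-{0})"
    by (simp add: prod.distrib mult_ac)
  also have "x * x ^ (card (UNIV :: 'a set) - 1) = x ^ Suc (card (UNIV :: 'a set) - 1)"
    by (subst power_Suc) auto
  also have "Suc (card (UNIV :: 'a set) - 1) = card (UNIV :: 'a set)"
    using finite_UNIV_card_ge_0[where ?'a = 'a] by simp
  also have "(\<Prod>y\<in>UNIV-{0}. x * y) = (\<Prod>y\<in>UNIV-{0}. y)"
    by (rule prod.reindex_bij_witness[of _ "\<lambda>y. y / x" "\<lambda>y. x * y"]) (use False in auto)
  finally show ?thesis
    by simp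
qed (use finite_UNIV_card_ge_0[where ?'a = 'a] in auto)

lemma sum_atMost_0: "(\<Sum>i\<le>(0::nat). f i) = f 0" by simp
lemma sum_atMost_1: "(\<Sum>i\<le>(1::nat). f i) = f 0 + f 1"
  by (simp add: atMost_Suc add.commute)
lemma sum_atMost_2: "(\<Sum>i\<le>(2::nat). f i) = f 0 + f 1 + f 2"
  by (simp add: atMost_Suc numeral_2_eq_2 add_ac)

lemmas sum_small = sum_atMost_0 sum_atMost_1 sum_atMost_2

lemma x_eq_by_sq: fixes x y :: "'a::idom"
  assumes "x * x = y * y" "2 * x = 2 * y" shows "x = y"
proof -
  have "(x - y) * (x - y) = 0"
    using assms by (simp add: algebra_simps) (metis mult_2 distrib_left mult.commute)
  then show ?thesis by simp
qed

lemma fmul_comm: "fmul f g = fmul g (f :: nat \<Rightarrow> nat \<Rightarrow> 'a::comm_semiring_1)"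
proof (intro ext)
  fix i j
  have "fmul f g i j = (\<Sum>i1\<le>i. \<Sum>j1\<le>j. g (i - i1) (j - j1) * f i1 j1)"
    by (simp add: fmul_def mult.commute)
  also have "\<dots> = (\<Sum>i1\<le>i. \<Sum>j1\<le>j. g i1 (j - j1) * f (i - i1) j1)"
    by (rule sum.reindex_bij_witness[of _ "\<lambda>k. i - k" "\<lambda>k. i - k"]) auto
  also have "\<dots> = (\<Sum>i1\<le>i. \<Sum>j1\<le>j. g i1 j1 * f (i - i1) (j - j1))"
    by (rule sum.cong[OF refl], rule sum.reindex_bij_witness[of _ "\<lambda>k. j - k" "\<lambda>k. j - k"]) auto
  finally show "fmul f g i j = fmul g f i j" by (simp add: fmul_def)
qed

lemma is_form_fmul:
  assumes "is_form a b f" "is_form c d g"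
  shows "is_form (a + c) (b + d) (fmul f g)"
  unfolding is_form_def
proof (intro allI impI)
  fix i j assume h: "a + c < i \<or> b + d < j"
  have "f i1 j1 * g (i - i1) (j - j1) = 0" if "i1 \<le> i" "j1 \<le> j" for i1 j1
  proof -
    have "a < i1 \<or> b < j1 \<or> c < i - i1 \<or> d < j - j1" using h that by auto
    then show ?thesis using assms unfolding is_form_def by auto
  qed
  then show "fmul f g i j = 0" unfolding fmul_def by simp
qed

lemma fmul_fscale_l: "fmul (fscale c f) g = fscale c (fmul f (g :: nat \<Rightarrow> nat \<Rightarrow> 'a::comm_semiring_1))"
  by (simp add: fmul_def fscale_def sum_distrib_left mult_ac)

lemma fmul_fscale_r: "fmul f (fscale c g) = fscale c (fmul f (g :: nat \<Rightarrow> nat \<Rightarrow> 'a::comm_semiring_1))"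
  by (simp add: fmul_def fscale_def sum_distrib_left mult_ac)

lemma fscale_fscale: "fscale c (fscale d f) = fscale (c * d) (f :: nat \<Rightarrow> nat \<Rightarrow> 'a::comm_semiring_1)"
  by (simp add: fscale_def mult_ac)

lemma is_form_fscale: "is_form a b f \<Longrightarrow> is_form a b (fscale c (f :: nat \<Rightarrow> nat \<Rightarrow> 'a::comm_semiring_1))"
  by (auto simp: is_form_def fscale_def)

lemma form22_eqI:
  assumes "is_form 2 2 f" "is_form 2 2 g"
    and "f 0 0 = g 0 0" "f 0 1 = g 0 1" "f 0 2 = g 0 2"
    and "f 1 0 = g 1 0" "f 1 1 = g 1 1" "f 1 2 = g 1 2"
    and "f 2 0 = g 2 0" "f 2 1 = g 2 1" "f 2 2 = g 2 2"
  shows "f = g"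
proof (intro ext)
  fix i j
  show "f i j = g i j"
  proof (cases "i \<le> 2 \<and> j \<le> 2")
    case True
    then have "i \<in> {0,1,2}" "j \<in> {0,1,2}" by auto
    then show ?thesis using assms by auto
  next
    case False
    then show ?thesis using assms(1,2) unfolding is_form_def by auto
  qed
qed


locale ffs =
  fixes p :: nat and emb :: "'k::{field,finite} \<Rightarrow> 'K::{field,finite}"
  assumes pr: "prime p"
    and cardk: "card (UNIV :: 'k set) = p"
    and cardK: "card (UNIV :: 'K set) = p ^ 2"
    and emb_add: "\<forall>x y. emb (x + y) = emb x + emb y"
    and emb_mult: "\<forall>x y. emb (x * y) = emb x * emb y"
    and emb_one: "emb 1 = 1"
begin

lemma emb_add' [simp]: "emb (x + y) = emb x + emb y" using emb_add by blast
lemma emb_mult' [simp]: "emb (x * y) = emb x * emb y" using emb_mult by blast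
lemma emb_1 [simp]: "emb 1 = 1" using emb_one .
lemma emb_0 [simp]: "emb 0 = 0"
proof -
  have "emb 0 + emb 0 = emb 0 + 0" using emb_add'[of 0 0] by simp
  then show ?thesis by (simp only: add_left_cancel)
qed
lemma emb_minus [simp]: "emb (- x) = - emb x"
proof -
  have "emb (- x) + emb x = 0" using emb_add'[of "-x" x] by simp
  then show ?thesis by (simp add: eq_neg_iff_add_eq_0)
qed
lemma emb_diff [simp]: "emb (x - y) = emb x - emb y"
  using emb_add'[of x "-y"] by simp
lemma emb_pow [simp]: "emb (x ^ n) = emb x ^ n"
  by (induction n) auto
lemma emb_of_nat [simp]: "emb (of_nat n) = of_nat n"
  by (induction n) auto
lemma emb_eq0_iff [simp]: "emb x = 0 \<longleftrightarrow> x = 0"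
proof
  assume "emb x = 0"
  show "x = 0"
  proof (rule ccontr)
    assume "x \<noteq> 0"
    then have "emb (x * inverse x) = 1" by simp
    with \<open>emb x = 0\<close> show False by simp
  qed
qed simp
lemma emb_inj: "inj emb"
proof (rule injI)
  fix x y assume "emb x = emb y"
  then have "emb (x - y) = 0" by simp
  then show "x = y" by (simp del: emb_diff)
qed
lemma emb_eq_iff [simp]: "emb x = emb y \<longleftrightarrow> x = y"
  by (rule inj_eq[OF emb_inj])
lemma emb_inverse [simp]: "emb (inverse x) = inverse (emb x)"
proof (cases "x = 0")
  case False
  then have "emb x * emb (inverse x) = 1" using emb_mult'[of x "inverse x"] by simp
  then show ?thesis by (simp add: inverse_unique)
qed simp
lemma emb_divide [simp]: "emb (x / y) = emb x / emb y"
  by (simp add: divide_inverse)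
lemma emb_sum: "emb (sum f A) = (\<Sum>a\<in>A. emb (f a))"
  by (induction A rule: infinite_finite_induct) auto

lemma p_gt1: "p > 1" using pr prime_gt_1_nat by blast

lemma char_k: "CHAR('k) = p"
proof -
  have "CHAR('k) dvd p" using CHAR_dvd_CARD[where 'a='k] cardk by simp
  then have "CHAR('k) = 1 \<or> CHAR('k) = p" using pr prime_nat_iff by blast
  then show ?thesis by auto
qed

lemma char_K: "CHAR('K) = p"
proof -
  have "of_nat p = (0::'k)" using char_k of_nat_CHAR by metis
  then have "of_nat p = (0::'K)" using emb_of_nat[of p] by simp
  then have "CHAR('K) dvd p" by (simp add: of_nat_eq_0_iff_char_dvd)
  then have "CHAR('K) = 1 \<or> CHAR('K) = p" using pr prime_nat_iff by blast
  then show ?thesis by auto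
qed

lemma prK: "prime CHAR('K)" using char_K pr by simp
lemma frob_add: "((x::'K) + y) ^ p = x ^ p + y ^ p"
  by (rule freshmans_dream[OF prK char_K[symmetric]])
lemma frob_mult: "((x::'K) * y) ^ p = x ^ p * y ^ p"
  by (simp add: power_mult_distrib)
lemma frob_minus: "(- (x::'K)) ^ p = - (x ^ p)"
  by (rule minus_power_prime_CHAR[OF char_K[symmetric] pr])
lemma frob_diff: "((x::'K) - y) ^ p = x ^ p - y ^ p"
  using frob_add[of x "-y"] frob_minus[of y] by simp
lemma frob_div: "((x::'K) / y) ^ p = x ^ p / y ^ p"
  by (simp add: power_divide)
lemma frob_sum: "(sum (f :: _ \<Rightarrow> 'K) A) ^ p = (\<Sum>a\<in>A. f a ^ p)"
  by (rule freshmans_dream_sum[OF prK char_K[symmetric]])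
lemma frob_frob [simp]: "((x::'K) ^ p) ^ p = x"
proof -
  have "(x ^ p) ^ p = x ^ (p * p)" by (simp only: power_mult)
  also have "p * p = card (UNIV :: 'K set)" by (simp add: cardK power2_eq_square)
  finally have "(x ^ p) ^ p = x ^ card (UNIV :: 'K set)" .
  then show ?thesis using fin_field_pow_card by simp
qed
lemma frob_inj: "(x::'K) ^ p = y ^ p \<longleftrightarrow> x = y"
  by (metis frob_frob)
lemma frob_0 [simp]: "(0::'K) ^ p = 0" using p_gt1 by simp
lemma frob_1 [simp]: "(1::'K) ^ p = 1" by simp
lemma frob_eq0 [simp]: "(x::'K) ^ p = 0 \<longleftrightarrow> x = 0" using p_gt1 by simp
lemma kfix [simp]: "(y::'k) ^ p = y"
  using fin_field_pow_card[of y] cardk by simp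

lemma rat_iff: "x \<in> range emb \<longleftrightarrow> x ^ p = x"
proof
  assume "x \<in> range emb"
  then obtain y where "x = emb y" by auto
  then show "x ^ p = x" by (metis emb_pow kfix)
next
  assume hx: "x ^ p = x"
  define q :: "'K poly" where "q = Polynomial.monom 1 p - [:0, 1:]"
  have dq: "degree q = p" unfolding q_def using p_gt1
    by (simp only: diff_conv_add_uminus, subst degree_add_eq_left) (auto simp: degree_monom_eq)
  then have q0: "q \<noteq> 0" using p_gt1 by auto
  have pq: "poly q z = z ^ p - z" for z by (simp add: q_def poly_monom)
  have sub: "range emb \<subseteq> {z. poly q z = 0}"
    using pq by (auto simp del: emb_pow simp add: emb_pow[symmetric])
  have "card {z. poly q z = 0} \<le> p" using card_poly_roots_bound[OF q0] dq by simp
  moreover have "card (range emb) = p" using card_image[OF emb_inj] cardk by simp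
  ultimately have "range emb = {z. poly q z = 0}"
    using sub card_mono[OF poly_roots_finite[OF q0] sub]
    by (intro card_subset_eq) (auto intro: poly_roots_finite[OF q0])
  moreover have "x \<in> {z. poly q z = 0}" using pq hx by simp
  ultimately show "x \<in> range emb" by simp
qed

definition iv :: "'K \<Rightarrow> 'k" where "iv x = (SOME y. emb y = x)"
lemma iv_emb [simp]: "iv (emb x) = x"
proof -
  have "emb (iv (emb x)) = emb x" unfolding iv_def by (rule someI) rule
  then show ?thesis by simp
qed
lemma emb_iv: "x ^ p = x \<Longrightarrow> emb (iv x) = x"
proof -
  assume "x ^ p = x"
  then obtain y where "x = emb y" using rat_iff by auto
  then show ?thesis by simp
qed

lemma card_range_emb: "card (range emb) = p" using card_image[OF emb_inj] cardk by simp

end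

context ffs
begin

definition embf :: "(nat \<Rightarrow> nat \<Rightarrow> 'k) \<Rightarrow> nat \<Rightarrow> nat \<Rightarrow> 'K" where
  "embf f = (\<lambda>i j. emb (f i j))"

lemma embf_fmul: "embf (fmul f g) = fmul (embf f) (embf g)"
  by (simp add: embf_def fmul_def emb_sum)

lemma embf_fscale: "embf (fscale c f) = fscale (emb c) (embf f)"
  by (simp add: embf_def fscale_def)

lemma embf_inj: "embf f = embf g \<Longrightarrow> f = g"
proof (intro ext)
  fix i j assume "embf f = embf g"
  then have "emb (f i j) = emb (g i j)" unfolding embf_def by meson
  then show "f i j = g i j" by simp
qed

lemma gconj_fmul: "gconj p (fmul f g) = fmul (gconj p f) (gconj p (g :: nat \<Rightarrow> nat \<Rightarrow> 'K))"
  by (simp add: gconj_def fmul_def frob_sum power_mult_distrib)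

lemma gconj_fscale: "gconj p (fscale c (f :: nat \<Rightarrow> nat \<Rightarrow> 'K)) = fscale (c ^ p) (gconj p f)"
  by (simp add: gconj_def fscale_def power_mult_distrib)

lemma gconj_gconj [simp]: "gconj p (gconj p (G :: nat \<Rightarrow> nat \<Rightarrow> 'K)) = G"
  by (simp add: gconj_def)

lemma prod_conj_rat: "(fmul G (gconj p G) i j) ^ p = fmul G (gconj p (G :: nat \<Rightarrow> nat \<Rightarrow> 'K)) i j"
proof -
  have "gconj p (fmul G (gconj p G)) = fmul G (gconj p G)"
    by (simp add: gconj_fmul fmul_comm)
  then show ?thesis unfolding gconj_def by metis
qed

definition Gf :: "'K \<Rightarrow> 'K \<Rightarrow> nat \<Rightarrow> nat \<Rightarrow> 'K" where
  "Gf g h = (\<lambda>i j. if i = 0 \<and> j = 1 then g else if i = 1 \<and> j = 0 then 1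
                    else if i = 1 \<and> j = 1 then h else 0)"

lemma Gf_form: "is_form 1 1 (Gf g h)" by (auto simp: is_form_def Gf_def)

definition Pc :: "'K \<Rightarrow> 'K \<Rightarrow> nat \<Rightarrow> nat \<Rightarrow> 'K" where
  "Pc g h = fmul (Gf g h) (gconj p (Gf g h))"

lemma Pc_coeffs:
  "Pc g h 0 0 = 0" "Pc g h 0 1 = 0" "Pc g h 1 0 = 0" "Pc g h 2 0 = 1"
  "Pc g h 0 2 = g * g ^ p" "Pc g h 1 1 = g + g ^ p" "Pc g h 1 2 = g * h ^ p + h * g ^ p"
  "Pc g h 2 1 = h + h ^ p" "Pc g h 2 2 = h * h ^ p"
  by (simp_all add: Pc_def fmul_def sum_small gconj_def Gf_def add_ac)

lemma is_form_gconj: "is_form a b G \<Longrightarrow> is_form a b (gconj p (G :: nat \<Rightarrow> nat \<Rightarrow> 'K))"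
  using p_gt1 by (simp add: is_form_def gconj_def)

lemma Pc_form: "is_form 2 2 (Pc g h)"
  using is_form_fmul[OF Gf_form is_form_gconj[OF Gf_form], of g h g h]
  by (simp add: Pc_def numeral_2_eq_2)

definition Phi :: "'K \<Rightarrow> 'K \<Rightarrow> nat \<Rightarrow> nat \<Rightarrow> 'k" where
  "Phi g h = (\<lambda>i j. iv (Pc g h i j))"

lemma embf_Phi: "embf (Phi g h) = Pc g h"
  unfolding embf_def Phi_def Pc_def by (intro ext emb_iv prod_conj_rat)

lemma Phi_coeff: "emb (Phi g h i j) = Pc g h i j"
  using embf_Phi unfolding embf_def by metis

lemma Phi_form: "is_form 2 2 (Phi g h)"
  using Pc_form unfolding is_form_def by (metis Phi_coeff emb_0 emb_eq_iff)

lemma Phi_coeffs: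
  "Phi g h 0 0 = 0" "Phi g h 0 1 = 0" "Phi g h 1 0 = 0" "Phi g h 2 0 = 1"
  using Phi_coeff[of g h] Pc_coeffs[of g h] by (metis emb_0 emb_1 emb_eq_iff)+

lemma Phi_02: "Phi g h 0 2 = 0 \<longleftrightarrow> g = 0"
  using Phi_coeff[of g h 0 2] Pc_coeffs(5)[of g h] by (metis emb_eq0_iff frob_eq0 mult_eq_0_iff)

end

definition nrm :: "(nat \<Rightarrow> nat \<Rightarrow> 'a::field) \<Rightarrow> nat \<Rightarrow> nat \<Rightarrow> 'a" where
  "nrm a = fscale (inverse (a 2 0)) a"

definition cls :: "(nat \<Rightarrow> nat \<Rightarrow> 'a::field) \<Rightarrow> (nat \<Rightarrow> nat \<Rightarrow> 'a) set" where
  "cls a = {fscale c a | c. c \<noteq> 0}"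

lemma scale_classes_cls: "scale_classes A = cls ` A"
  by (simp add: scale_classes_def cls_def)

lemma fscale_1 [simp]: "fscale 1 (a :: nat \<Rightarrow> nat \<Rightarrow> 'a::monoid_mult) = a" by (simp add: fscale_def)

lemma nrm_fscale: "(c::'a::field) \<noteq> 0 \<Longrightarrow> nrm (fscale c a) = nrm a"
  by (auto simp: nrm_def fscale_def fun_eq_iff)

lemma nrm_id: "a 2 0 = 1 \<Longrightarrow> nrm a = a"
  by (simp add: nrm_def)

lemma nrm_20: "a 2 0 \<noteq> 0 \<Longrightarrow> nrm a 2 0 = 1"
  by (simp add: nrm_def fscale_def)

lemma fscale_nrm: "a 2 0 \<noteq> 0 \<Longrightarrow> a = fscale (a 2 0) (nrm a)"
  by (simp add: nrm_def fscale_def fun_eq_iff)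

lemma cls_fscale: "(d::'a::field) \<noteq> 0 \<Longrightarrow> cls (fscale d x) = cls x"
proof -
  assume d: "d \<noteq> 0"
  show ?thesis
  proof
    show "cls (fscale d x) \<subseteq> cls x"
      using d by (auto simp: cls_def fscale_fscale)
    show "cls x \<subseteq> cls (fscale d x)"
    proof
      fix y assume "y \<in> cls x"
      then obtain e where e: "e \<noteq> 0" "y = fscale e x" by (auto simp: cls_def)
      then have "y = fscale (e / d) (fscale d x)" using d by (simp add: fscale_fscale)
      then show "y \<in> cls (fscale d x)" using d e by (auto simp: cls_def)
    qed
  qed
qed

lemma cls_eq_iff:
  assumes "a 2 0 \<noteq> 0" "b 2 0 \<noteq> (0::'a::field)"
  shows "cls a = cls b \<longleftrightarrow> nrm a = nrm b"
proof
  assume "cls a = cls b"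
  moreover have "b \<in> cls b" unfolding cls_def by (rule CollectI, rule exI[of _ 1]) simp
  ultimately obtain c where "c \<noteq> 0" "b = fscale c a" by (auto simp: cls_def)
  then show "nrm a = nrm b" by (simp add: nrm_fscale)
next
  assume "nrm a = nrm b"
  have "cls a = cls (nrm a)" using fscale_nrm[of a] cls_fscale assms(1) by metis
  also have "\<dots> = cls (nrm b)" using \<open>nrm a = nrm b\<close> by simp
  also have "\<dots> = cls b" using fscale_nrm[of b] cls_fscale assms(2) by metis
  finally show "cls a = cls b" .
qed

lemma card_image_rel:
  assumes "\<forall>x\<in>S. \<forall>y\<in>S. f x = f y \<longleftrightarrow> h x = h y"
  shows "card (f ` S) = card (h ` S)"
proof -
  define F where "F = (\<lambda>z. f (inv_into S h z))"
  have inv1: "inv_into S h (h x) \<in> S" "h (inv_into S h (h x)) = h x" if "x \<in> S" for x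
    using that by (auto intro: inv_into_into f_inv_into_f)
  have Fh: "F (h x) = f x" if "x \<in> S" for x
    using assms inv1[OF that] that unfolding F_def by blast
  have "inj_on F (h ` S)"
  proof (rule inj_onI)
    fix u v assume "u \<in> h ` S" "v \<in> h ` S" "F u = F v"
    then obtain x y where "x \<in> S" "y \<in> S" "u = h x" "v = h y" by auto
    then show "u = v" using Fh assms \<open>F u = F v\<close> by auto
  qed
  moreover have "F ` (h ` S) = f ` S"
    using Fh by (auto simp: image_image)
  ultimately show ?thesis using card_image by metis
qed

lemma card_classes:
  assumes "\<forall>a\<in>A. a 2 0 \<noteq> (0::'a::field)"
  shows "card (scale_classes A) = card (nrm ` A)"
  unfolding scale_classes_cls
  by (rule card_image_rel) (use assms cls_eq_iff in blast)

lemma nrm_image_eq: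
  assumes "\<forall>a\<in>A. nrm a \<in> S" "\<forall>b\<in>S. b \<in> A \<and> nrm b = b"
  shows "nrm ` A = S"
  using assms by force

lemma card_classes_sing:
  "card (scale_classes {a \<in> sing_forms. P a}) = card (nrm ` {a \<in> (sing_forms :: (nat \<Rightarrow> nat \<Rightarrow> 'a::field) set). P a})"
  by (rule card_classes) (auto simp: sing_forms_def)

lemma card_fibres2:
  assumes fin: "finite D" and sD: "\<And>x. x \<in> D \<Longrightarrow> s x \<in> D"
    and nfix: "\<And>x. x \<in> D \<Longrightarrow> s x \<noteq> x"
    and fs: "\<And>x. x \<in> D \<Longrightarrow> f (s x) = f x"
    and fib: "\<And>x y. x \<in> D \<Longrightarrow> y \<in> D \<Longrightarrow> f x = f y \<Longrightarrow> y = x \<or> y = s x"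
  shows "card D = 2 * card (f ` D)"
proof -
  have D: "D = (\<Union>b\<in>f ` D. {x \<in> D. f x = b})" by auto
  have "card D = (\<Sum>b\<in>f ` D. card {x \<in> D. f x = b})"
    by (subst D, rule card_UN_disjoint) (use fin in auto)
  also have "\<dots> = (\<Sum>b\<in>f ` D. 2)"
  proof (rule sum.cong[OF refl])
    fix b assume "b \<in> f ` D"
    then obtain x where x: "x \<in> D" "b = f x" by auto
    have "{y \<in> D. f y = b} = {x, s x}"
    proof (intro equalityI subsetI)
      fix y assume "y \<in> {y \<in> D. f y = b}"
      then have "y \<in> D" "f x = f y" using x by auto
      then show "y \<in> {x, s x}" using fib[OF x(1)] by blast
    qed (use x sD fs in auto)
    then show "card {y \<in> D. f y = b} = 2" using nfix[OF x(1)] by simp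
  qed
  finally show ?thesis by simp
qed


definition singlike :: "(nat \<Rightarrow> nat \<Rightarrow> 'a::field) \<Rightarrow> bool" where
  "singlike b \<longleftrightarrow> is_form 2 2 b \<and> b 0 0 = 0 \<and> b 0 1 = 0 \<and> b 1 0 = 0 \<and> b 2 0 \<noteq> 0 \<and> b 0 2 \<noteq> 0"

lemma isf: "is_form a b f \<Longrightarrow> a < i \<or> b < j \<Longrightarrow> f i j = 0"
  by (auto simp: is_form_def)

lemma no_10:
  assumes "singlike b" "is_form 1 0 A" "is_form 1 2 B" "b = fmul A B"
  shows False
proof -
  have z: "A i j = 0" if "1 < i \<or> 0 < j" for i j using isf[OF assms(2) that] .
  have zb: "B i j = 0" if "1 < i \<or> 2 < j" for i j using isf[OF assms(3) that] .
  have c: "b 0 0 = A 0 0 * B 0 0" "b 1 0 = A 0 0 * B 1 0 + A 1 0 * B 0 0"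
    "b 2 0 = A 1 0 * B 1 0" "b 0 2 = A 0 0 * B 0 2"
    using assms(4) by (simp_all add: fmul_def sum_small z zb)
  show False using assms(1) c unfolding singlike_def by auto
qed

lemma no_01:
  assumes "singlike b" "is_form 0 1 A" "is_form 2 1 B" "b = fmul A B"
  shows False
proof -
  have z: "A i j = 0" if "0 < i \<or> 1 < j" for i j using isf[OF assms(2) that] .
  have zb: "B i j = 0" if "2 < i \<or> 1 < j" for i j using isf[OF assms(3) that] .
  have c: "b 0 0 = A 0 0 * B 0 0" "b 0 1 = A 0 0 * B 0 1 + A 0 1 * B 0 0"
    "b 2 0 = A 0 0 * B 2 0" "b 0 2 = A 0 1 * B 0 1"
    using assms(4) by (simp_all add: fmul_def sum_small z zb)
  show False using assms(1) c unfolding singlike_def by auto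
qed

lemma no_20:
  assumes "singlike b" "is_form 2 0 A" "is_form 0 2 B" "b = fmul A B"
  shows False
proof -
  have z: "A i j = 0" if "2 < i \<or> 0 < j" for i j using isf[OF assms(2) that] .
  have zb: "B i j = 0" if "0 < i \<or> 2 < j" for i j using isf[OF assms(3) that] .
  have c: "b 0 0 = A 0 0 * B 0 0" "b 2 0 = A 2 0 * B 0 0" "b 0 2 = A 0 0 * B 0 2"
    using assms(4) by (simp_all add: fmul_def sum_small z zb)
  show False using assms(1) c unfolding singlike_def by auto
qed

lemma red_11:
  assumes "singlike b" "e1 \<le> 2" "e2 \<le> 2" "(e1, e2) \<noteq> (0, 0)" "(e1, e2) \<noteq> (2, 2)"
    "is_form e1 e2 A" "is_form (2 - e1) (2 - e2) B" "b = fmul A B"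
  shows "e1 = 1 \<and> e2 = 1"
proof -
  have "e1 \<in> {0,1,2}" "e2 \<in> {0,1,2}" using assms(2,3) by auto
  then consider "e1 = 0" "e2 = 1" | "e1 = 0" "e2 = 2" | "e1 = 1" "e2 = 0" | "e1 = 1" "e2 = 1"
    | "e1 = 1" "e2 = 2" | "e1 = 2" "e2 = 0" | "e1 = 2" "e2 = 1"
    using assms(4,5) by auto
  then show ?thesis
  proof cases
    case 1
    then have "is_form 0 1 A" "is_form 2 1 B" using assms(6,7) by simp_all
    then show ?thesis using no_01[OF assms(1)] assms(8) by blast
  next
    case 2
    then have "is_form 0 2 A" "is_form 2 0 B" using assms(6,7) by simp_all
    then show ?thesis using no_20[OF assms(1)] assms(8) fmul_comm by metis
  next
    case 3
    then have "is_form 1 0 A" "is_form 1 2 B" using assms(6,7) by simp_all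
    then show ?thesis using no_10[OF assms(1)] assms(8) by blast
  next
    case 5
    then have "is_form 1 2 A" "is_form 1 0 B" using assms(6,7) by simp_all
    then show ?thesis using no_10[OF assms(1)] assms(8) fmul_comm by metis
  next
    case 6
    then have "is_form 2 0 A" "is_form 0 2 B" using assms(6,7) by simp_all
    then show ?thesis using no_20[OF assms(1)] assms(8) by blast
  next
    case 7
    then have "is_form 2 1 A" "is_form 0 1 B" using assms(6,7) by simp_all
    then show ?thesis using no_01[OF assms(1)] assms(8) fmul_comm by metis
  qed simp
qed


context ffs
begin

lemma Phi_singlike: "g \<noteq> 0 \<Longrightarrow> singlike (Phi g h)"
  unfolding singlike_def using Phi_form Phi_coeffs Phi_02 by auto

lemma rat_root:
  assumes "(x::'K) ^ p = x" "x + y = g + g ^ p" "x * y = g * g ^ p"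
  shows "g ^ p = g"
proof -
  have "(x - g) * (x - g ^ p) = x * x - (x + y) * x + x * y"
    using assms(2,3) by (simp add: algebra_simps)
  also have "\<dots> = 0" by (simp add: algebra_simps)
  finally have "x = g \<or> x = g ^ p" by simp
  then show ?thesis using assms(1) by (metis frob_frob)
qed

lemma Phi_11a:
  assumes "is_form 1 1 A" "is_form 1 1 B" "Phi g h = fmul A B" "A 0 0 = 0"
  shows "g ^ p = g \<and> h ^ p = h"
proof -
  have z: "A i j = 0" if "1 < i \<or> 1 < j" for i j using isf[OF assms(1) that] .
  have zb: "B i j = 0" if "1 < i \<or> 1 < j" for i j using isf[OF assms(2) that] .
  have c: "Phi g h 1 0 = A 1 0 * B 0 0" "Phi g h 2 0 = A 1 0 * B 1 0"
    "Phi g h 0 2 = A 0 1 * B 0 1" "Phi g h 1 1 = A 0 1 * B 1 0 + A 1 0 * B 0 1 + A 1 1 * B 0 0"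
    "Phi g h 2 1 = A 1 0 * B 1 1 + A 1 1 * B 1 0" "Phi g h 2 2 = A 1 1 * B 1 1"
    using assms(3,4) by (simp_all add: fmul_def sum_small z zb)
  have n: "A 1 0 * B 1 0 = 1" using c(2) Phi_coeffs by simp
  then have "A 1 0 \<noteq> 0" by auto
  then have b00: "B 0 0 = 0" using c(1) Phi_coeffs by simp
  have e: "emb (Phi g h i j) = Pc g h i j" for i j by (rule Phi_coeff)
  define x where "x = emb (A 0 1 * B 1 0)"
  define y where "y = emb (A 1 0 * B 0 1)"
  have "x + y = g + g ^ p" using e[of 1 1] c(4) b00 Pc_coeffs(6) by (simp add: x_def y_def)
  moreover have "x * y = g * g ^ p"
  proof -
    have "x * y = emb ((A 1 0 * B 1 0) * (A 0 1 * B 0 1))" by (simp add: x_def y_def mult_ac)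
    also have "\<dots> = emb (Phi g h 0 2)" using n c(3) by simp
    finally show ?thesis using e[of 0 2] Pc_coeffs(5) by simp
  qed
  moreover have "x ^ p = x" unfolding x_def using rat_iff by blast
  ultimately have g: "g ^ p = g" by (rule rat_root[rotated])
  define z where "z = emb (A 1 1 * B 1 0)"
  define w where "w = emb (A 1 0 * B 1 1)"
  have "z + w = h + h ^ p" using e[of 2 1] c(5) Pc_coeffs(8) by (simp add: z_def w_def add_ac)
  moreover have "z * w = h * h ^ p"
  proof -
    have "z * w = emb ((A 1 0 * B 1 0) * (A 1 1 * B 1 1))" by (simp add: z_def w_def mult_ac)
    also have "\<dots> = emb (Phi g h 2 2)" using n c(6) by simp
    finally show ?thesis using e[of 2 2] Pc_coeffs(9) by simp
  qed
  moreover have "z ^ p = z" unfolding z_def using rat_iff by blast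
  ultimately have "h ^ p = h" by (rule rat_root[rotated])
  with g show ?thesis by simp
qed

lemma Phi_11:
  assumes "is_form 1 1 A" "is_form 1 1 B" "Phi g h = fmul A B"
  shows "g ^ p = g \<and> h ^ p = h"
proof -
  have z: "A i j = 0" if "1 < i \<or> 1 < j" for i j using isf[OF assms(1) that] .
  have zb: "B i j = 0" if "1 < i \<or> 1 < j" for i j using isf[OF assms(2) that] .
  have "Phi g h 0 0 = A 0 0 * B 0 0" using assms(3) by (simp add: fmul_def)
  then have "A 0 0 = 0 \<or> B 0 0 = 0" using Phi_coeffs by simp
  then show ?thesis
  proof
    assume "A 0 0 = 0" then show ?thesis using Phi_11a assms by blast
  next
    assume "B 0 0 = 0" then show ?thesis using Phi_11a[of B A] assms fmul_comm by metis
  qed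
qed

lemma Phi_irred:
  assumes "g \<noteq> 0" "\<not> (g ^ p = g \<and> h ^ p = h)"
  shows "irred_form 2 2 (Phi g h)"
  unfolding irred_form_def
proof (intro conjI)
  show "is_form 2 2 (Phi g h)" by (rule Phi_form)
  show "Phi g h \<noteq> (\<lambda>i j. 0)" using Phi_coeffs(4) by (metis one_neq_zero)
  show "(2::nat, 2::nat) \<noteq> (0, 0)" by simp
  show "\<not> (\<exists>e1 e2 G H. e1 \<le> 2 \<and> e2 \<le> 2 \<and> (e1, e2) \<noteq> (0, 0) \<and> (e1, e2) \<noteq> (2, 2) \<and>
          is_form e1 e2 G \<and> is_form (2 - e1) (2 - e2) H \<and> Phi g h = fmul G H)"
  proof
    assume "\<exists>e1 e2 G H. e1 \<le> 2 \<and> e2 \<le> 2 \<and> (e1, e2) \<noteq> (0, 0) \<and> (e1, e2) \<noteq> (2, 2) \<and>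
          is_form e1 e2 G \<and> is_form (2 - e1) (2 - e2) H \<and> Phi g h = fmul G H"
    then obtain e1 e2 G H where h: "e1 \<le> 2" "e2 \<le> 2" "(e1, e2) \<noteq> (0, 0)" "(e1, e2) \<noteq> (2, 2)"
      "is_form e1 e2 G" "is_form (2 - e1) (2 - e2) H" "Phi g h = fmul G H" by blast
    have "e1 = 1 \<and> e2 = 1" using red_11[OF Phi_singlike[OF assms(1)] h] .
    then have "is_form 1 1 G" "is_form 1 1 H" using h(5,6) by auto
    then show False using Phi_11 h(7) assms(2) by blast
  qed
qed

end

lemma irred_no_fact:
  assumes "irred_form d1 d2 F" "e1 \<le> d1" "e2 \<le> d2" "(e1, e2) \<noteq> (0, 0)" "(e1, e2) \<noteq> (d1, d2)"
    "is_form e1 e2 G" "is_form (d1 - e1) (d2 - e2) H" "F = fmul G H"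
  shows False
  using assms unfolding irred_form_def by blast

context ffs
begin

lemma iv_0 [simp]: "iv 0 = 0" using iv_emb[of 0] by simp
lemma iv_1 [simp]: "iv 1 = 1" using iv_emb[of 1] by simp

lemma Phi_all:
  "Phi g h 0 0 = 0" "Phi g h 0 1 = 0" "Phi g h 1 0 = 0" "Phi g h 2 0 = 1"
  "Phi g h 0 2 = iv (g * g ^ p)" "Phi g h 1 1 = iv (g + g ^ p)" "Phi g h 1 2 = iv (g * h ^ p + h * g ^ p)"
  "Phi g h 2 1 = iv (h + h ^ p)" "Phi g h 2 2 = iv (h * h ^ p)"
  by (simp_all only: Phi_def Pc_coeffs iv_0 iv_1)

lemma Phi_red_g0: "\<not> irred_form 2 2 (Phi 0 h)"
proof
  assume irr: "irred_form 2 2 (Phi 0 h)"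
  define A :: "nat \<Rightarrow> nat \<Rightarrow> 'k" where "A = (\<lambda>i j. if i = 2 \<and> j = 0 then 1 else 0)"
  define B :: "nat \<Rightarrow> nat \<Rightarrow> 'k" where "B = (\<lambda>i j. if i = 0 then (if j = 0 then 1 else if j = 1 then iv (h + h ^ p)
       else if j = 2 then iv (h * h ^ p) else 0) else 0)"
  have fA: "is_form 2 0 A" by (auto simp: is_form_def A_def)
  have fB: "is_form 0 2 B" by (auto simp: is_form_def B_def)
  have fAB: "is_form 2 2 (fmul A B)" using is_form_fmul[OF fA fB] by (simp add: numeral_2_eq_2)
  have "Phi 0 h = fmul A B"
    by (rule form22_eqI[OF Phi_form fAB])
       (simp_all only: Phi_all, simp_all add: fmul_def sum_small A_def B_def)
  then show False using irred_no_fact[OF irr, of 2 0 A B] fA fB by simp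
qed

lemma gconj_Gf: "g ^ p = g \<Longrightarrow> h ^ p = h \<Longrightarrow> gconj p (Gf g h) = Gf g h"
  by (auto simp: gconj_def Gf_def fun_eq_iff)

lemma Phi_red_rat:
  assumes "g ^ p = g" "h ^ p = h"
  shows "\<not> irred_form 2 2 (Phi g h)"
proof
  assume irr: "irred_form 2 2 (Phi g h)"
  define C :: "nat \<Rightarrow> nat \<Rightarrow> 'k" where "C = (\<lambda>i j. if i = 0 \<and> j = 1 then iv g else if i = 1 \<and> j = 0 then 1
                    else if i = 1 \<and> j = 1 then iv h else 0)"
  have fC: "is_form 1 1 C" by (auto simp: is_form_def C_def)
  have "embf C = Gf g h" using assms by (auto simp: embf_def C_def Gf_def fun_eq_iff emb_iv)
  then have "embf (fmul C C) = embf (Phi g h)"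
    using assms by (simp add: embf_fmul embf_Phi Pc_def gconj_Gf)
  then have "Phi g h = fmul C C" using embf_inj by metis
  then show False using irred_no_fact[OF irr, of 1 1 C C] fC by simp
qed

end

lemma P1_iff: "P \<in> P1 \<longleftrightarrow> (\<exists>t. P = (1, t)) \<or> P = (0, 1)"
  by (auto simp: P1_def)

context ffs
begin

lemma eval_Gf: "eval_form 1 1 (Gf g h) (x0, x1) (y0, y1) = g * x0 * y1 + x1 * y0 + h * x1 * y1"
  by (simp add: eval_form_def sum_small Gf_def)

lemma eval_cGf: "eval_form 1 1 (gconj p (Gf g h)) (x0, x1) (y0, y1) = g ^ p * x0 * y1 + x1 * y0 + h ^ p * x1 * y1"
  by (simp add: eval_form_def sum_small Gf_def gconj_def)

lemma eval_fscale: "eval_form 1 1 (fscale u G) P Q = u * eval_form 1 1 G P Q"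
  by (simp add: eval_form_def fscale_def sum_distrib_left distrib_left mult_ac)

lemma conj_inter_fscale: "(u::'K) \<noteq> 0 \<Longrightarrow> conj_inter p (fscale u G) = conj_inter p G"
  unfolding conj_inter_def gconj_fscale eval_fscale using p_gt1 by simp

definition Opt :: "('K \<times> 'K) \<times> ('K \<times> 'K)" where "Opt = ((1, 0), (1, 0))"

lemma mem_CI: "((x0, x1), (y0, y1)) \<in> conj_inter p (Gf g h) \<longleftrightarrow>
    (x0, x1) \<in> P1 \<and> (y0, y1) \<in> P1 \<and> g * x0 * y1 + x1 * y0 + h * x1 * y1 = 0 \<and>
    g ^ p * x0 * y1 + x1 * y0 + h ^ p * x1 * y1 = 0"
  unfolding conj_inter_def by (simp only: mem_Collect_eq prod.case eval_Gf eval_cGf)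

lemma Opt_in: "Opt \<in> conj_inter p (Gf g h)"
  unfolding Opt_def mem_CI by (auto simp: P1_iff)

lemma rat_emb: "x ^ p = x \<Longrightarrow> x \<in> range emb" using rat_iff by blast

lemma Opt_rat: "rational_pt emb Opt"
  unfolding Opt_def rational_pt_def by (auto intro: rat_emb)

lemma y1_0:
  assumes "((x0, x1), (y0, y1)) \<in> conj_inter p (Gf g h)" "y1 = 0"
  shows "((x0, x1), (y0, y1)) = Opt"
proof -
  have y0: "y0 = 1" using assms unfolding mem_CI P1_iff by auto
  then have "x1 = 0" using assms unfolding mem_CI by simp
  then have "x0 = 1" using assms unfolding mem_CI P1_iff by auto
  with y0 \<open>x1 = 0\<close> assms(2) show ?thesis by (simp add: Opt_def)
qed

lemma CI_rat_g:
  assumes "g \<noteq> 0" "g ^ p = g" "h ^ p \<noteq> h"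
  shows "conj_inter p (Gf g h) = {Opt}"
proof (intro equalityI subsetI)
  fix z assume z: "z \<in> conj_inter p (Gf g h)"
  obtain x0 x1 y0 y1 where zz: "z = ((x0, x1), (y0, y1))" by (metis prod.collapse)
  note m = z[unfolded zz mem_CI]
  have e1: "g * x0 * y1 + x1 * y0 + h * x1 * y1 = 0" and e2: "g ^ p * x0 * y1 + x1 * y0 + h ^ p * x1 * y1 = 0"
    using m by simp_all
  have "(h - h ^ p) * x1 * y1 = (g * x0 * y1 + x1 * y0 + h * x1 * y1) - (g ^ p * x0 * y1 + x1 * y0 + h ^ p * x1 * y1)"
    using assms(2) by (simp add: algebra_simps)
  then have "(h - h ^ p) * x1 * y1 = 0" using e1 e2 by simp
  then have "x1 = 0 \<or> y1 = 0" using assms(3) by simp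
  then show "z \<in> {Opt}"
  proof
    assume "x1 = 0"
    then have "x0 = 1" using m unfolding P1_iff by auto
    then have "y1 = 0" using m \<open>x1 = 0\<close> assms(1) by simp
    then show ?thesis using y1_0 z zz by simp
  next
    assume "y1 = 0" then show ?thesis using y1_0 z zz by simp
  qed
qed (use Opt_in in simp)

lemma CI_irr_g:
  assumes "g ^ p \<noteq> g"
  shows "\<exists>z. conj_inter p (Gf g h) = {Opt, z} \<and> z \<noteq> Opt \<and> rational_pt emb z"
proof (cases "h ^ p = h")
  case True
  define Q2 where "Q2 = (if h = 0 then (0, 1) else (1, - 1 / h) :: 'K \<times> 'K)"
  define z where "z = ((0::'K, 1::'K), Q2)"
  have "conj_inter p (Gf g h) = {Opt, z}"
  proof (intro equalityI subsetI)
    fix w assume w: "w \<in> conj_inter p (Gf g h)"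
    obtain x0 x1 y0 y1 where ww: "w = ((x0, x1), (y0, y1))" by (metis prod.collapse)
    note m = w[unfolded ww mem_CI]
    have e1: "g * x0 * y1 + x1 * y0 + h * x1 * y1 = 0" and e2: "g ^ p * x0 * y1 + x1 * y0 + h ^ p * x1 * y1 = 0"
      using m by simp_all
    have "(g - g ^ p) * x0 * y1 = (g * x0 * y1 + x1 * y0 + h * x1 * y1) - (g ^ p * x0 * y1 + x1 * y0 + h ^ p * x1 * y1)"
      using True by (simp add: algebra_simps)
    then have "(g - g ^ p) * x0 * y1 = 0" using e1 e2 by simp
    then have "x0 = 0 \<or> y1 = 0" using assms by simp
    then show "w \<in> {Opt, z}"
    proof
      assume "x0 = 0"
      then have x1: "x1 = 1" using m unfolding P1_iff by auto
      then have e: "y0 + h * y1 = 0" using m \<open>x0 = 0\<close> by simp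
      have "(y0, y1) = Q2"
      proof (cases "h = 0")
        case True
        then show ?thesis using e m unfolding P1_iff Q2_def by auto
      next
        case False
        have "y0 = 1" using e m False unfolding P1_iff by auto
        then have "h * y1 = -1" using e by (simp add: eq_neg_iff_add_eq_0 add.commute)
        then have "y1 = -1/h" using False by (simp add: field_simps)
        then show ?thesis using \<open>y0 = 1\<close> False by (simp add: Q2_def)
      qed
      then show ?thesis using ww x1 \<open>x0 = 0\<close> z_def by simp
    next
      assume "y1 = 0" then show ?thesis using y1_0 w ww by simp
    qed
  next
    fix w assume "w \<in> {Opt, z}"
    moreover have "z \<in> conj_inter p (Gf g h)"
      unfolding z_def Q2_def using True by (auto simp: mem_CI P1_iff)
    ultimately show "w \<in> conj_inter p (Gf g h)" using Opt_in by auto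
  qed
  moreover have "z \<noteq> Opt" by (simp add: z_def Opt_def)
  moreover have "rational_pt emb z"
    unfolding rational_pt_def z_def Q2_def using True
    by (auto intro!: rat_emb simp: frob_div frob_minus)
  ultimately show ?thesis by blast
next
  case False
  define s where "s = - (g - g ^ p) / (h - h ^ p)"
  define c where "c = g + h * s"
  have hh: "h - h ^ p \<noteq> 0" using False by simp
  have gg: "g - g ^ p \<noteq> 0" using assms by simp
  have s0: "s \<noteq> 0" using hh gg by (simp add: s_def)
  have sd: "(g - g ^ p) + (h - h ^ p) * s = 0" using hh by (simp add: s_def field_simps)
  have sp: "s ^ p = s"
    unfolding s_def using hh by (simp add: frob_div frob_minus frob_diff field_simps)
  have cp: "g ^ p + h ^ p * s = c" using sd by (simp add: c_def algebra_simps)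
  define Q2 where "Q2 = (if c = 0 then (0, 1) else (1, - s / c) :: 'K \<times> 'K)"
  define z where "z = ((1::'K, s), Q2)"
  have "conj_inter p (Gf g h) = {Opt, z}"
  proof (intro equalityI subsetI)
    fix w assume w: "w \<in> conj_inter p (Gf g h)"
    obtain x0 x1 y0 y1 where ww: "w = ((x0, x1), (y0, y1))" by (metis prod.collapse)
    note m = w[unfolded ww mem_CI]
    have e1: "g * x0 * y1 + x1 * y0 + h * x1 * y1 = 0" and e2: "g ^ p * x0 * y1 + x1 * y0 + h ^ p * x1 * y1 = 0"
      using m by simp_all
    have "y1 * ((g - g ^ p) * x0 + (h - h ^ p) * x1) = (g * x0 * y1 + x1 * y0 + h * x1 * y1) - (g ^ p * x0 * y1 + x1 * y0 + h ^ p * x1 * y1)"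
      by (simp add: algebra_simps)
    then have "y1 * ((g - g ^ p) * x0 + (h - h ^ p) * x1) = 0" using e1 e2 by simp
    then have "y1 = 0 \<or> (g - g ^ p) * x0 + (h - h ^ p) * x1 = 0" by simp
    then show "w \<in> {Opt, z}"
    proof
      assume "y1 = 0" then show ?thesis using y1_0 w ww by simp
    next
      assume l: "(g - g ^ p) * x0 + (h - h ^ p) * x1 = 0"
      have x0: "x0 = 1" using m l hh unfolding P1_iff by auto
      then have "(h - h ^ p) * (x1 - s) = ((g - g ^ p) * x0 + (h - h ^ p) * x1) - ((g - g ^ p) + (h - h ^ p) * s)"
        by (simp add: algebra_simps)
      then have "(h - h ^ p) * (x1 - s) = 0" using l sd by simp
      then have x1: "x1 = s" using hh by simp
      have e: "c * y1 + s * y0 = 0" using m x0 x1 by (simp add: c_def algebra_simps)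
      have "(y0, y1) = Q2"
      proof (cases "c = 0")
        case True
        then have "y0 = 0" using e s0 by simp
        moreover have "(y0, y1) \<in> P1" using m by simp
        ultimately show ?thesis using True unfolding P1_iff Q2_def by auto
      next
        case False
        have "y0 = 1" using e m s0 False unfolding P1_iff by auto
        then have "c * y1 = - s" using e by (simp add: eq_neg_iff_add_eq_0 add.commute)
        then have "y1 = - s / c" using False by (simp add: field_simps)
        then show ?thesis using \<open>y0 = 1\<close> False by (simp add: Q2_def)
      qed
      then show ?thesis using ww x0 x1 z_def by simp
    qed
  next
    fix w assume "w \<in> {Opt, z}"
    moreover have "z \<in> conj_inter p (Gf g h)"
    proof -
      have "g * 1 * snd Q2 + s * fst Q2 + h * s * snd Q2 = 0"
        unfolding Q2_def using c_def by (auto simp: field_simps)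
      moreover have "g ^ p * 1 * snd Q2 + s * fst Q2 + h ^ p * s * snd Q2 = 0"
        unfolding Q2_def using cp by (auto simp: field_simps)
      moreover have "Q2 \<in> P1" unfolding Q2_def P1_iff by auto
      ultimately show ?thesis unfolding z_def by (cases Q2) (simp add: mem_CI P1_iff)
    qed
    ultimately show "w \<in> conj_inter p (Gf g h)" using Opt_in by auto
  qed
  moreover have "z \<noteq> Opt" using s0 by (simp add: z_def Opt_def)
  moreover have "rational_pt emb z"
  proof -
    have "c ^ p = c" using cp sp by (simp add: c_def frob_add frob_mult)
    then show ?thesis
      unfolding rational_pt_def z_def Q2_def using sp
      by (auto intro!: rat_emb simp: frob_div frob_minus)
  qed
  ultimately show ?thesis by blast
qed

end

lemma form11_eqI:
  assumes "is_form 1 1 f" "is_form 1 1 g"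
    and "f 0 0 = g 0 0" "f 0 1 = g 0 1" "f 1 0 = g 1 0" "f 1 1 = g 1 1"
  shows "f = g"
proof (intro ext)
  fix i j
  show "f i j = g i j"
  proof (cases "i \<le> 1 \<and> j \<le> 1")
    case True
    then have "i \<in> {0,1}" "j \<in> {0,1}" by auto
    then show ?thesis using assms by auto
  next
    case False
    then show ?thesis using assms(1,2) unfolding is_form_def by auto
  qed
qed

lemma irred_fscale:
  assumes "irred_form d1 d2 X" "X = fscale c F" "(c::'a::field) \<noteq> 0"
  shows "irred_form d1 d2 F"
proof -
  have F: "F = fscale (inverse c) X" using assms(2,3) by (simp add: fscale_fscale)
  have "is_form d1 d2 F" using assms(1) F is_form_fscale unfolding irred_form_def by metis
  moreover have "F \<noteq> (\<lambda>i j. 0)" using assms(1,2) unfolding irred_form_def fscale_def by auto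
  moreover have "\<not> (\<exists>e1 e2 G H. e1 \<le> d1 \<and> e2 \<le> d2 \<and> (e1, e2) \<noteq> (0, 0) \<and> (e1, e2) \<noteq> (d1, d2) \<and>
          is_form e1 e2 G \<and> is_form (d1 - e1) (d2 - e2) H \<and> F = fmul G H)"
  proof
    assume "\<exists>e1 e2 G H. e1 \<le> d1 \<and> e2 \<le> d2 \<and> (e1, e2) \<noteq> (0, 0) \<and> (e1, e2) \<noteq> (d1, d2) \<and>
          is_form e1 e2 G \<and> is_form (d1 - e1) (d2 - e2) H \<and> F = fmul G H"
    then obtain e1 e2 G H where h: "e1 \<le> d1" "e2 \<le> d2" "(e1, e2) \<noteq> (0, 0)" "(e1, e2) \<noteq> (d1, d2)"
          "is_form e1 e2 G" "is_form (d1 - e1) (d2 - e2) H" "F = fmul G H" by blast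
    have "X = fmul (fscale c G) H" using assms(2) h(7) by (simp add: fmul_fscale_l)
    then show False using assms(1) h is_form_fscale unfolding irred_form_def by blast
  qed
  ultimately show ?thesis using assms(1) unfolding irred_form_def by blast
qed

context ffs
begin

lemma case1_fw:
  assumes a: "a \<in> sing_forms" and irr: "irred_form 2 2 a" and cf: "conj_factor p emb a G"
  shows "\<exists>g h u. u \<noteq> 0 \<and> G = fscale u (Gf g h) \<and> nrm a = Phi g h \<and> g \<noteq> 0 \<and> \<not> (g ^ p = g \<and> h ^ p = h)"
proof -
  have fG: "is_form 1 1 G" and E: "embf a = fmul G (gconj p G)"
    using cf unfolding conj_factor_def embf_def by auto
  have z: "G i j = 0" if "1 < i \<or> 1 < j" for i j using isf[OF fG that] .
  have a0: "a 0 0 = 0" "a 2 0 \<noteq> 0" using a by (auto simp: sing_forms_def)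
  have "emb (a 0 0) = G 0 0 * G 0 0 ^ p"
    using fun_cong[OF fun_cong[OF E, of 0], of 0] by (simp add: embf_def fmul_def gconj_def)
  then have G00: "G 0 0 = 0" using a0 by auto
  have "emb (a 2 0) = G 1 0 * G 1 0 ^ p"
    using fun_cong[OF fun_cong[OF E, of 2], of 0] G00 p_gt1 by (simp add: embf_def fmul_def gconj_def sum_small z)
  then have u0: "G 1 0 \<noteq> 0" using a0 by auto
  define u where "u = G 1 0"
  define g where "g = G 0 1 / u"
  define h where "h = G 1 1 / u"
  have GG: "G = fscale u (Gf g h)"
    by (rule form11_eqI[OF fG is_form_fscale[OF Gf_form]])
       (use G00 u0 in \<open>simp_all add: fscale_def Gf_def u_def g_def h_def\<close>)
  have "embf a = fscale (u * u ^ p) (Pc g h)"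
    unfolding E GG Pc_def gconj_fscale fmul_fscale_l fmul_fscale_r fscale_fscale by (metis mult.commute)
  then have E2: "embf a = fscale (u * u ^ p) (embf (Phi g h))" by (simp add: embf_Phi)
  have "emb (a 2 0) = u * u ^ p"
    using fun_cong[OF fun_cong[OF E2, of 2], of 0] Phi_coeffs(4) by (simp add: embf_def fscale_def)
  then have "embf a = embf (fscale (a 2 0) (Phi g h))" using E2 by (simp add: embf_fscale)
  then have aa: "a = fscale (a 2 0) (Phi g h)" by (rule embf_inj)
  obtain c where c: "c = a 2 0" "c \<noteq> 0" using a0 by blast
  have aa': "a = fscale c (Phi g h)" using aa c by simp
  have nrm: "nrm a = Phi g h" unfolding aa' using c(2) nrm_fscale nrm_id Phi_coeffs(4) by metis
  have irrP: "irred_form 2 2 (Phi g h)" using irred_fscale[OF irr aa' c(2)] .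
  have g0: "g \<noteq> 0"
  proof
    assume "g = 0" then show False using irrP Phi_red_g0[of h] by simp
  qed
  have nr: "\<not> (g ^ p = g \<and> h ^ p = h)"
  proof
    assume "g ^ p = g \<and> h ^ p = h" then show False using irrP Phi_red_rat[of g h] by simp
  qed
  have u1: "u \<noteq> 0" using u0 u_def by simp
  show ?thesis by (intro exI[of _ g] exI[of _ h] exI[of _ u]) (use GG nrm u1 g0 nr in simp)
qed

end

context ffs
begin

lemma Phi_sing: "Phi g h \<in> sing_forms"
  unfolding sing_forms_def using Phi_form Phi_coeffs by simp

lemma Phi_nrm: "nrm (Phi g h) = Phi g h"
  by (rule nrm_id) (simp add: Phi_coeffs)

lemma Phi_cf: "conj_factor p emb (Phi g h) (Gf g h)"
  unfolding conj_factor_def using Gf_form embf_Phi by (simp add: embf_def Pc_def)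

lemma fw_a02:
  assumes "a \<in> sing_forms" "nrm a = Phi g h" "g \<noteq> 0"
  shows "a 0 2 \<noteq> 0"
proof -
  have a20: "a 2 0 \<noteq> 0" using assms(1) by (simp add: sing_forms_def)
  have "a 0 2 = a 2 0 * nrm a 0 2" by (simp add: nrm_def fscale_def a20)
  then show ?thesis using a20 assms(2,3) Phi_02 by simp
qed

lemma case1i_fw:
  assumes "a \<in> sing_forms" "case1i p emb a"
  shows "\<exists>g h. nrm a = Phi g h \<and> g ^ p \<noteq> g \<and> a 0 2 \<noteq> 0"
proof -
  obtain G where irr: "irred_form 2 2 a" and cf: "conj_factor p emb a G"
    and c2: "card (conj_inter p G) = 2"
    using assms(2) unfolding case1i_def by blast
  obtain g h u where u: "u \<noteq> 0" "G = fscale u (Gf g h)" "nrm a = Phi g h" "g \<noteq> 0"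
    "\<not> (g ^ p = g \<and> h ^ p = h)"
    using case1_fw[OF assms(1) irr cf] by blast
  have ci: "conj_inter p G = conj_inter p (Gf g h)" using u(1,2) conj_inter_fscale by simp
  have "g ^ p \<noteq> g"
  proof
    assume gp: "g ^ p = g"
    then have "h ^ p \<noteq> h" using u(5) by simp
    then have "conj_inter p G = {Opt}" using CI_rat_g[OF u(4) gp] ci by simp
    then show False using c2 by simp
  qed
  then show ?thesis using u(3,4) fw_a02[OF assms(1)] by blast
qed

lemma case1iii_fw:
  assumes "a \<in> sing_forms" "case1iii p emb a"
  shows "\<exists>g h. nrm a = Phi g h \<and> g \<noteq> 0 \<and> g ^ p = g \<and> h ^ p \<noteq> h \<and> a 0 2 \<noteq> 0"
proof -
  obtain G where irr: "irred_form 2 2 a" and cf: "conj_factor p emb a G"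
    and c2: "card (conj_inter p G) = 1"
    using assms(2) unfolding case1iii_def by blast
  obtain g h u where u: "u \<noteq> 0" "G = fscale u (Gf g h)" "nrm a = Phi g h" "g \<noteq> 0"
    "\<not> (g ^ p = g \<and> h ^ p = h)"
    using case1_fw[OF assms(1) irr cf] by blast
  have ci: "conj_inter p G = conj_inter p (Gf g h)" using u(1,2) conj_inter_fscale by simp
  have gp: "g ^ p = g"
  proof (rule ccontr)
    assume "g ^ p \<noteq> g"
    then obtain z where "conj_inter p (Gf g h) = {Opt, z}" "z \<noteq> Opt" using CI_irr_g by blast
    then show False using c2 ci by simp
  qed
  then have "h ^ p \<noteq> h" using u(5) by simp
  then show ?thesis using gp u(3,4) fw_a02[OF assms(1)] by blast
qed

lemma case1ii_fw:
  assumes "a \<in> sing_forms" "case1ii p emb a"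
  shows False
proof -
  obtain G where irr: "irred_form 2 2 a" and cf: "conj_factor p emb a G"
    and nr: "\<forall>z\<in>conj_inter p G. \<not> rational_pt emb z"
    using assms(2) unfolding case1ii_def by blast
  obtain g h u where u: "u \<noteq> 0" "G = fscale u (Gf g h)"
    using case1_fw[OF assms(1) irr cf] by blast
  have ci: "conj_inter p G = conj_inter p (Gf g h)" using u(1,2) conj_inter_fscale by simp
  then show False using nr Opt_in Opt_rat by metis
qed

lemma case1i_rev:
  assumes "g ^ p \<noteq> g"
  shows "case1i p emb (Phi g h)"
proof -
  have g0: "g \<noteq> 0" using assms by auto
  have irr: "irred_form 2 2 (Phi g h)" using Phi_irred[OF g0] assms by simp
  obtain z where z: "conj_inter p (Gf g h) = {Opt, z}" "z \<noteq> Opt" "rational_pt emb z"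
    using CI_irr_g[OF assms] by blast
  have "card (conj_inter p (Gf g h)) = 2" using z by auto
  moreover have "\<forall>w\<in>conj_inter p (Gf g h). rational_pt emb w" using z Opt_rat by auto
  ultimately show ?thesis unfolding case1i_def using irr Phi_cf by blast
qed

lemma case1iii_rev:
  assumes "g \<noteq> 0" "g ^ p = g" "h ^ p \<noteq> h"
  shows "case1iii p emb (Phi g h)"
proof -
  have irr: "irred_form 2 2 (Phi g h)" using Phi_irred[OF assms(1)] assms by simp
  have z: "conj_inter p (Gf g h) = {Opt}" using CI_rat_g[OF assms] .
  show ?thesis unfolding case1iii_def
    by (intro conjI irr exI[of _ "Gf g h"]) (use Phi_cf z Opt_rat in auto)
qed

lemma Phi_conj: "Phi (g ^ p) (h ^ p) = Phi g h"
proof -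
  have "Gf (g ^ p) (h ^ p) = gconj p (Gf g h)"
    using p_gt1 by (auto simp: Gf_def gconj_def fun_eq_iff)
  then have "Pc (g ^ p) (h ^ p) = Pc g h" by (simp add: Pc_def fmul_comm)
  then show ?thesis by (simp add: Phi_def)
qed

lemma two_roots:
  assumes "(x::'K) + x ^ p = y + y ^ p" "x * x ^ p = y * y ^ p"
  shows "y = x \<or> y = x ^ p"
proof -
  have "(y - x) * (y - x ^ p) = y * y - (x + x ^ p) * y + x * x ^ p" by (simp add: algebra_simps)
  also have "\<dots> = 0" using assms by (simp add: algebra_simps)
  finally show ?thesis by simp
qed

lemma Phi_fib:
  assumes "Phi g h = Phi g' h'"
  shows "(g', h') = (g, h) \<or> (g', h') = (g ^ p, h ^ p)"
proof -
  have "Pc g h = Pc g' h'" using assms embf_Phi by metis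
  then have c: "Pc g h i j = Pc g' h' i j" for i j by simp
  have c11: "g + g ^ p = g' + g' ^ p" using c[of 1 1] unfolding Pc_coeffs .
  have c02: "g * g ^ p = g' * g' ^ p" using c[of 0 2] unfolding Pc_coeffs .
  have c21: "h + h ^ p = h' + h' ^ p" using c[of 2 1] unfolding Pc_coeffs .
  have c22: "h * h ^ p = h' * h' ^ p" using c[of 2 2] unfolding Pc_coeffs .
  have g: "g' = g \<or> g' = g ^ p" using two_roots[OF c11 c02] .
  have h: "h' = h \<or> h' = h ^ p" using two_roots[OF c21 c22] .
  have m: "g * h ^ p + h * g ^ p = g' * h' ^ p + h' * g' ^ p" using c[of 1 2] unfolding Pc_coeffs .
  show ?thesis
  proof (cases "g' = g")
    case True
    show ?thesis
    proof (cases "h' = h")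
      case False
      then have hh: "h' = h ^ p" using h by simp
      show ?thesis
      proof (cases "g ^ p = g")
        case True then show ?thesis using \<open>g' = g\<close> hh by simp
      next
        case False
        have "(g - g ^ p) * (h - h ^ p) = (g * h + h ^ p * g ^ p) - (g * h ^ p + h * g ^ p)"
          by (simp add: algebra_simps)
        also have "\<dots> = 0" using m \<open>g' = g\<close> hh by (simp add: algebra_simps)
        finally have "h ^ p = h" using False by simp
        then show ?thesis using \<open>g' = g\<close> hh by simp
      qed
    qed (use True in simp)
  next
    case False
    then have gg: "g' = g ^ p" using g by simp
    show ?thesis
    proof (cases "h' = h ^ p")
      case False
      then have hh: "h' = h" using h by simp
      show ?thesis
      proof (cases "g ^ p = g")
        case True then show ?thesis using gg hh by simp
      next
        case False
        have "(g - g ^ p) * (h - h ^ p) = (g ^ p * h ^ p + h * g) - (g * h ^ p + h * g ^ p)"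
          by (simp add: algebra_simps)
        also have "\<dots> = 0" using m gg hh by (simp add: algebra_simps)
        finally have "h ^ p = h" using False by simp
        then show ?thesis using gg hh by simp
      qed
    qed (use gg in simp)
  qed
qed

definition Phi2 :: "'K \<times> 'K \<Rightarrow> nat \<Rightarrow> nat \<Rightarrow> 'k" where "Phi2 = (\<lambda>(g, h). Phi g h)"
definition sig :: "'K \<times> 'K \<Rightarrow> 'K \<times> 'K" where "sig = (\<lambda>(g, h). (g ^ p, h ^ p))"

lemma card_fib_Phi:
  assumes "finite D" "\<And>x. x \<in> D \<Longrightarrow> sig x \<in> D" "\<And>x. x \<in> D \<Longrightarrow> sig x \<noteq> x"
  shows "card D = 2 * card (Phi2 ` D)"
proof (rule card_fibres2[OF assms])
  fix x assume "x \<in> D"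
  show "Phi2 (sig x) = Phi2 x" by (cases x) (simp add: Phi2_def sig_def Phi_conj)
next
  fix x y assume "Phi2 x = Phi2 y"
  then show "y = x \<or> y = sig x" using Phi_fib by (cases x, cases y) (simp add: Phi2_def sig_def)
qed

lemma card_nonrat: "card {x :: 'K. x ^ p \<noteq> x} = p ^ 2 - p"
proof -
  have "{x :: 'K. x ^ p \<noteq> x} = UNIV - range emb" using rat_iff by auto
  then show ?thesis using card_Diff_subset[of "range emb" UNIV] card_range_emb cardK by simp
qed

lemma card_rat_nz: "card {x :: 'K. x \<noteq> 0 \<and> x ^ p = x} = p - 1"
proof -
  have "{x :: 'K. x \<noteq> 0 \<and> x ^ p = x} = range emb - {0}" using rat_iff by auto
  moreover have "0 \<in> range emb" by (metis emb_0 rangeI)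
  ultimately show ?thesis using card_range_emb by simp
qed

lemma count_1i: "2 * card (scale_classes {a \<in> sing_forms. case1i p emb a}) = p ^ 3 * (p - 1)"
proof -
  define D where "D = {x :: 'K. x ^ p \<noteq> x} \<times> (UNIV :: 'K set)"
  have "nrm ` {a \<in> sing_forms. case1i p emb a} = Phi2 ` D"
  proof (rule nrm_image_eq)
    show "\<forall>a\<in>{a \<in> sing_forms. case1i p emb a}. nrm a \<in> Phi2 ` D"
    proof
      fix a assume "a \<in> {a \<in> sing_forms. case1i p emb a}"
      then obtain g h where gh: "nrm a = Phi g h" "g ^ p \<noteq> g" using case1i_fw by blast
      then have "(g, h) \<in> D" by (simp add: D_def)
      then have "Phi2 (g, h) \<in> Phi2 ` D" by (rule imageI)
      then show "nrm a \<in> Phi2 ` D" using gh by (simp add: Phi2_def)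
    qed
    show "\<forall>b\<in>Phi2 ` D. b \<in> {a \<in> sing_forms. case1i p emb a} \<and> nrm b = b"
    proof
      fix b assume "b \<in> Phi2 ` D"
      then obtain g h where gh: "b = Phi g h" "g ^ p \<noteq> g" by (auto simp: D_def Phi2_def)
      then show "b \<in> {a \<in> sing_forms. case1i p emb a} \<and> nrm b = b"
        using Phi_sing case1i_rev Phi_nrm by simp
    qed
  qed
  then have "card (scale_classes {a \<in> sing_forms. case1i p emb a}) = card (Phi2 ` D)"
    using card_classes_sing[of "\<lambda>a. case1i p emb a"] by simp
  moreover have "card D = 2 * card (Phi2 ` D)"
  proof (rule card_fib_Phi)
    show "finite D" by simp
    fix x assume "x \<in> D"
    then show "sig x \<in> D" by (cases x) (simp add: D_def sig_def)
  next
    fix x assume "x \<in> D"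
    then show "sig x \<noteq> x" by (cases x) (simp add: D_def sig_def)
  qed
  moreover have "card D = (p ^ 2 - p) * p ^ 2"
    unfolding D_def using card_nonrat cardK by (simp add: card_cartesian_product)
  moreover have "(p ^ 2 - p) * p ^ 2 = p ^ 3 * (p - 1)"
    by (simp add: power2_eq_square power3_eq_cube algebra_simps diff_mult_distrib)
  ultimately show ?thesis by simp
qed

lemma count_1iii: "2 * card (scale_classes {a \<in> sing_forms. case1iii p emb a}) = p * (p - 1) ^ 2"
proof -
  define D where "D = {x :: 'K. x \<noteq> 0 \<and> x ^ p = x} \<times> {x :: 'K. x ^ p \<noteq> x}"
  have "nrm ` {a \<in> sing_forms. case1iii p emb a} = Phi2 ` D"
  proof (rule nrm_image_eq)
    show "\<forall>a\<in>{a \<in> sing_forms. case1iii p emb a}. nrm a \<in> Phi2 ` D"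
    proof
      fix a assume "a \<in> {a \<in> sing_forms. case1iii p emb a}"
      then obtain g h where gh: "nrm a = Phi g h" "g \<noteq> 0" "g ^ p = g" "h ^ p \<noteq> h"
        using case1iii_fw by blast
      then have "(g, h) \<in> D" by (simp add: D_def)
      then have "Phi2 (g, h) \<in> Phi2 ` D" by (rule imageI)
      then show "nrm a \<in> Phi2 ` D" using gh by (simp add: Phi2_def)
    qed
    show "\<forall>b\<in>Phi2 ` D. b \<in> {a \<in> sing_forms. case1iii p emb a} \<and> nrm b = b"
    proof
      fix b assume "b \<in> Phi2 ` D"
      then obtain g h where gh: "b = Phi g h" "g \<noteq> 0" "g ^ p = g" "h ^ p \<noteq> h"
        by (auto simp: D_def Phi2_def)
      then show "b \<in> {a \<in> sing_forms. case1iii p emb a} \<and> nrm b = b"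
        using Phi_sing case1iii_rev Phi_nrm by simp
    qed
  qed
  then have "card (scale_classes {a \<in> sing_forms. case1iii p emb a}) = card (Phi2 ` D)"
    using card_classes_sing[of "\<lambda>a. case1iii p emb a"] by simp
  moreover have "card D = 2 * card (Phi2 ` D)"
  proof (rule card_fib_Phi)
    show "finite D" by simp
    fix x assume "x \<in> D"
    then show "sig x \<in> D" by (cases x) (auto simp: D_def sig_def eq_commute[of _ "_ ^ p"])
  next
    fix x assume "x \<in> D"
    then show "sig x \<noteq> x" by (cases x) (auto simp: D_def sig_def)
  qed
  moreover have "card D = (p - 1) * (p ^ 2 - p)"
    unfolding D_def using card_nonrat card_rat_nz by (simp add: card_cartesian_product)
  moreover have "(p - 1) * (p ^ 2 - p) = p * (p - 1) ^ 2"
    by (simp add: power2_eq_square algebra_simps diff_mult_distrib diff_mult_distrib2)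
  ultimately show ?thesis by simp
qed

lemma count_1ii: "card (scale_classes {a \<in> sing_forms. case1ii p emb a}) = 0"
proof -
  have "{a \<in> sing_forms. case1ii p emb a} = {}" using case1ii_fw by blast
  then show ?thesis unfolding scale_classes_def by (simp only: image_empty card.empty)
qed

end

definition Xq :: "'a::field \<Rightarrow> 'a \<Rightarrow> nat \<Rightarrow> nat \<Rightarrow> 'a" where
  "Xq u v = (\<lambda>i j. if i = 2 then (if j = 0 then 1 else if j = 1 then u else if j = 2 then v else 0) else 0)"

lemma Xq_form: "is_form 2 2 (Xq u v)" by (auto simp: is_form_def Xq_def)

lemma Xq_sing: "Xq u v \<in> sing_forms"
  unfolding sing_forms_def using Xq_form by (simp add: Xq_def)

lemma Xq_nrm: "nrm (Xq u v) = Xq u v" by (rule nrm_id) (simp add: Xq_def)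

lemma Xq_02: "Xq u v 0 2 = 0" by (simp add: Xq_def)

lemma Xq_inj: "Xq u v = Xq u' v' \<Longrightarrow> u = u' \<and> v = v'"
proof -
  assume "Xq u v = Xq u' v'"
  then have "Xq u v 2 1 = Xq u' v' 2 1" "Xq u v 2 2 = Xq u' v' 2 2" by simp_all
  then show ?thesis by (simp add: Xq_def)
qed

lemma irr20_00:
  assumes "irred_form 2 0 (A :: nat \<Rightarrow> nat \<Rightarrow> 'a::field)"
  shows "A 0 0 \<noteq> 0"
proof
  assume A0: "A 0 0 = 0"
  have fA: "is_form 2 0 A" using assms by (simp add: irred_form_def)
  define G :: "nat \<Rightarrow> nat \<Rightarrow> 'a" where "G = (\<lambda>i j. if i = 1 \<and> j = 0 then 1 else 0)"
  define H :: "nat \<Rightarrow> nat \<Rightarrow> 'a" where "H = (\<lambda>i j. if j = 0 then (if i = 0 then A 1 0 else if i = 1 then A 2 0 else 0) else 0)"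
  have fG: "is_form 1 0 G" by (auto simp: is_form_def G_def)
  have fH: "is_form 1 0 H" by (auto simp: is_form_def H_def)
  have "A = fmul G H"
  proof (intro ext)
    fix i j
    show "A i j = fmul G H i j"
    proof (cases "j = 0 \<and> i \<le> 2")
      case True
      then have "i \<in> {0,1,2}" "j = 0" by auto
      then show ?thesis using A0 by (auto simp: fmul_def sum_small G_def H_def)
    next
      case False
      have "is_form 2 0 (fmul G H)" using is_form_fmul[OF fG fH] by (simp add: numeral_2_eq_2)
      then show ?thesis using fA False unfolding is_form_def by auto
    qed
  qed
  then show False using irred_no_fact[OF assms, of 1 0 G H] fG fH by simp
qed

lemma irr02_00:
  assumes "irred_form 0 2 (A :: nat \<Rightarrow> nat \<Rightarrow> 'a::field)"
  shows "A 0 0 \<noteq> 0"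
proof
  assume A0: "A 0 0 = 0"
  have fA: "is_form 0 2 A" using assms by (simp add: irred_form_def)
  define G :: "nat \<Rightarrow> nat \<Rightarrow> 'a" where "G = (\<lambda>i j. if i = 0 \<and> j = 1 then 1 else 0)"
  define H :: "nat \<Rightarrow> nat \<Rightarrow> 'a" where "H = (\<lambda>i j. if i = 0 then (if j = 0 then A 0 1 else if j = 1 then A 0 2 else 0) else 0)"
  have fG: "is_form 0 1 G" by (auto simp: is_form_def G_def)
  have fH: "is_form 0 1 H" by (auto simp: is_form_def H_def)
  have "A = fmul G H"
  proof (intro ext)
    fix i j
    show "A i j = fmul G H i j"
    proof (cases "i = 0 \<and> j \<le> 2")
      case True
      then have "j \<in> {0,1,2}" "i = 0" by auto
      then show ?thesis using A0 by (auto simp: fmul_def sum_small G_def H_def)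
    next
      case False
      have "is_form 0 2 (fmul G H)" using is_form_fmul[OF fG fH] by (simp add: numeral_2_eq_2)
      then show ?thesis using fA False unfolding is_form_def by auto
    qed
  qed
  then show False using irred_no_fact[OF assms, of 0 1 G H] fG fH by simp
qed

lemma case2_none:
  assumes "a \<in> sing_forms" "case2 a"
  shows False
proof -
  obtain A B where h: "irred_form 2 0 A" "irred_form 0 2 B" "a = fmul A B"
    using assms(2) unfolding case2_def by blast
  have fA: "is_form 2 0 A" and fB: "is_form 0 2 B" using h by (auto simp: irred_form_def)
  have "a 0 0 = A 0 0 * B 0 0" using h(3) by (simp add: fmul_def)
  then show False using irr20_00[OF h(1)] irr02_00[OF h(2)] assms(1) by (simp add: sing_forms_def)
qed


lemma case5_fw:
  assumes "a \<in> sing_forms" "case5 (a :: nat \<Rightarrow> nat \<Rightarrow> 'a::field)"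
  shows "\<exists>m. nrm a = Xq (2 * m) (m * m) \<and> a 0 2 = 0"
proof -
  obtain c L M where h: "c \<noteq> 0" "is_form 1 0 L" "is_form 0 1 M"
    "a = fscale c (fmul (fmul L L) (fmul M M))"
    using assms(2) unfolding case5_def by blast
  have zL: "L i j = 0" if "1 < i \<or> 0 < j" for i j using isf[OF h(2) that] .
  have zM: "M i j = 0" if "0 < i \<or> 1 < j" for i j using isf[OF h(3) that] .
  define l0 where "l0 = L 0 0"
  define l1 where "l1 = L 1 0"
  define m0 where "m0 = M 0 0"
  define m1 where "m1 = M 0 1"
  have c: "a 0 0 = c * (l0 * l0 * (m0 * m0))" "a 2 0 = c * (l1 * l1 * (m0 * m0))"
    "a 0 1 = c * (l0 * l0 * (m0 * m1 + m1 * m0))" "a 0 2 = c * (l0 * l0 * (m1 * m1))"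
    "a 1 0 = c * ((l0 * l1 + l1 * l0) * (m0 * m0))" "a 1 1 = c * ((l0 * l1 + l1 * l0) * (m0 * m1 + m1 * m0))"
    "a 1 2 = c * ((l0 * l1 + l1 * l0) * (m1 * m1))" "a 2 1 = c * (l1 * l1 * (m0 * m1 + m1 * m0))"
    "a 2 2 = c * (l1 * l1 * (m1 * m1))"
    unfolding h(4) l0_def l1_def m0_def m1_def by (simp_all add: fscale_def fmul_def sum_small zL zM)
  have a20: "a 2 0 \<noteq> 0" and a00: "a 0 0 = 0" using assms(1) by (auto simp: sing_forms_def)
  then have nz: "l1 \<noteq> 0" "m0 \<noteq> 0" using c(2) by auto
  have l0: "l0 = 0" using a00 c(1) h(1) nz by simp
  define m where "m = m1 / m0"
  have fa: "is_form 2 2 a" using assms(1) by (simp add: sing_forms_def)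
  have "nrm a = Xq (2 * m) (m * m)" unfolding nrm_def
    by (rule form22_eqI[OF is_form_fscale[OF fa] Xq_form])
       (use c l0 nz h(1) in \<open>simp_all add: nrm_def fscale_def Xq_def m_def field_simps\<close>)
  moreover have "a 0 2 = 0" using c(4) l0 by simp
  ultimately show ?thesis by blast
qed

lemma case5_rev: "case5 (Xq (2 * m) (m * m) :: nat \<Rightarrow> nat \<Rightarrow> 'a::field)"
proof -
  define L :: "nat \<Rightarrow> nat \<Rightarrow> 'a" where "L = (\<lambda>i j. if i = 1 \<and> j = 0 then 1 else 0)"
  define M :: "nat \<Rightarrow> nat \<Rightarrow> 'a" where "M = (\<lambda>i j. if i = 0 then (if j = 0 then 1 else if j = 1 then m else 0) else 0)"
  have fL: "is_form 1 0 L" by (auto simp: is_form_def L_def)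
  have fM: "is_form 0 1 M" by (auto simp: is_form_def M_def)
  have zL: "L i j = 0" if "1 < i \<or> 0 < j" for i j using isf[OF fL that] .
  have zM: "M i j = 0" if "0 < i \<or> 1 < j" for i j using isf[OF fM that] .
  have f2: "is_form 2 2 (fmul (fmul L L) (fmul M M))"
    using is_form_fmul[OF is_form_fmul[OF fL fL] is_form_fmul[OF fM fM]] by (simp add: numeral_2_eq_2)
  have "Xq (2 * m) (m * m) = fmul (fmul L L) (fmul M M)"
    by (rule form22_eqI[OF Xq_form f2]) (simp_all add: Xq_def fmul_def sum_small L_def M_def)
  then have e: "Xq (2 * m) (m * m) = fscale 1 (fmul (fmul L L) (fmul M M))" by simp
  have "L \<noteq> (\<lambda>i j. 0)"
  proof
    assume "L = (\<lambda>i j. 0)" then have "L 1 0 = 0" by simp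
    then show False by (simp add: L_def)
  qed
  moreover have "M \<noteq> (\<lambda>i j. 0)"
  proof
    assume "M = (\<lambda>i j. 0)" then have "M 0 0 = 0" by simp
    then show False by (simp add: M_def)
  qed
  ultimately show ?thesis unfolding case5_def
    by (intro exI[of _ 1] exI[of _ L] exI[of _ M] conjI) (use e fL fM in simp_all)
qed

lemma count_5:
  "card (scale_classes {a \<in> (sing_forms :: (nat \<Rightarrow> nat \<Rightarrow> 'a::{field,finite}) set). case5 a}) = card (UNIV :: 'a set)"
proof -
  define f :: "'a \<Rightarrow> nat \<Rightarrow> nat \<Rightarrow> 'a" where "f = (\<lambda>m. Xq (2 * m) (m * m))"
  have "nrm ` {a \<in> (sing_forms :: (nat \<Rightarrow> nat \<Rightarrow> 'a) set). case5 a} = f ` UNIV"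
  proof (rule nrm_image_eq)
    show "\<forall>a\<in>{a \<in> sing_forms. case5 a}. nrm a \<in> f ` UNIV"
    proof
      fix a assume "a \<in> {a \<in> (sing_forms :: (nat \<Rightarrow> nat \<Rightarrow> 'a) set). case5 a}"
      then obtain m where "nrm a = Xq (2 * m) (m * m)" using case5_fw by blast
      then show "nrm a \<in> f ` UNIV" unfolding f_def by simp
    qed
    show "\<forall>b\<in>f ` UNIV. b \<in> {a \<in> sing_forms. case5 a} \<and> nrm b = b"
    proof
      fix b assume "b \<in> f ` UNIV"
      then obtain m where "b = Xq (2 * m) (m * m)" unfolding f_def by blast
      then show "b \<in> {a \<in> sing_forms. case5 a} \<and> nrm b = b" using case5_rev[of m] by (simp add: Xq_sing Xq_nrm)
    qed
  qed
  moreover have "inj f"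
  proof (rule injI)
    fix x y assume "f x = f y"
    then have "2 * x = 2 * y \<and> x * x = y * y" unfolding f_def by (rule Xq_inj)
    then show "x = y" using x_eq_by_sq by blast
  qed
  moreover have "card (f ` UNIV) = card (UNIV :: 'a set)" using card_image[OF \<open>inj f\<close>] .
  ultimately show ?thesis using card_classes_sing[of "case5 :: (nat \<Rightarrow> nat \<Rightarrow> 'a) \<Rightarrow> bool"] by simp
qed


definition Cf :: "'a::field \<Rightarrow> 'a \<Rightarrow> nat \<Rightarrow> nat \<Rightarrow> 'a" where
  "Cf g h = (\<lambda>i j. if i = 0 \<and> j = 1 then g else if i = 1 \<and> j = 0 then 1
                    else if i = 1 \<and> j = 1 then h else 0)"

lemma Cf_form: "is_form 1 1 (Cf g h)" by (auto simp: is_form_def Cf_def)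

lemma CC_form: "is_form 2 2 (fmul (Cf g h) (Cf g h))"
  using is_form_fmul[OF Cf_form Cf_form, of g h g h] by (simp add: numeral_2_eq_2)

lemma CC_coeffs:
  "fmul (Cf g h) (Cf g h) 0 0 = 0" "fmul (Cf g h) (Cf g h) 0 1 = 0"
  "fmul (Cf g h) (Cf g h) 1 0 = 0" "fmul (Cf g h) (Cf g h) 2 0 = 1"
  "fmul (Cf g h) (Cf g h) 0 2 = g * g" "fmul (Cf g h) (Cf g h) 1 1 = 2 * g"
  "fmul (Cf g h) (Cf g h) 2 1 = 2 * h" "fmul (Cf g h) (Cf g h) 2 2 = h * h"
  by (simp_all add: fmul_def sum_small Cf_def)

lemma irr11_01:
  assumes "irred_form 1 1 (G :: nat \<Rightarrow> nat \<Rightarrow> 'a::field)" "G 0 0 = 0"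
  shows "G 0 1 \<noteq> 0"
proof
  assume G01: "G 0 1 = 0"
  have fG: "is_form 1 1 G" using assms by (simp add: irred_form_def)
  define A :: "nat \<Rightarrow> nat \<Rightarrow> 'a" where "A = (\<lambda>i j. if i = 1 \<and> j = 0 then 1 else 0)"
  define B :: "nat \<Rightarrow> nat \<Rightarrow> 'a" where "B = (\<lambda>i j. if i = 0 then (if j = 0 then G 1 0 else if j = 1 then G 1 1 else 0) else 0)"
  have fA: "is_form 1 0 A" by (auto simp: is_form_def A_def)
  have fB: "is_form 0 1 B" by (auto simp: is_form_def B_def)
  have fAB: "is_form 1 1 (fmul A B)" using is_form_fmul[OF fA fB] by simp
  have "G = fmul A B"
    by (rule form11_eqI[OF fG fAB]) (use assms(2) G01 in \<open>simp_all add: fmul_def sum_small A_def B_def\<close>)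
  then show False using irred_no_fact[OF assms(1), of 1 0 A B] fA fB by simp
qed

lemma case4_fw:
  assumes "a \<in> sing_forms" "case4 (a :: nat \<Rightarrow> nat \<Rightarrow> 'a::field)"
  shows "\<exists>g h. g \<noteq> 0 \<and> nrm a = fmul (Cf g h) (Cf g h) \<and> a 0 2 \<noteq> 0"
proof -
  obtain c G where h: "c \<noteq> 0" "irred_form 1 1 G" "a = fscale c (fmul G G)"
    using assms(2) unfolding case4_def by blast
  have fG: "is_form 1 1 G" using h(2) by (simp add: irred_form_def)
  have z: "G i j = 0" if "1 < i \<or> 1 < j" for i j using isf[OF fG that] .
  have c: "a 0 0 = c * (G 0 0 * G 0 0)" "a 2 0 = c * (G 1 0 * G 1 0)" "a 0 2 = c * (G 0 1 * G 0 1)"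
    unfolding h(3) by (simp_all add: fscale_def fmul_def sum_small z)
  have a20: "a 2 0 \<noteq> 0" and a00: "a 0 0 = 0" using assms(1) by (auto simp: sing_forms_def)
  then have G10: "G 1 0 \<noteq> 0" using c(2) by auto
  have G00: "G 0 0 = 0" using a00 c(1) h(1) by simp
  have G01: "G 0 1 \<noteq> 0" using irr11_01[OF h(2) G00] .
  define u where "u = G 1 0"
  define g where "g = G 0 1 / u"
  define hh where "hh = G 1 1 / u"
  have GG: "G = fscale u (Cf g hh)"
    by (rule form11_eqI[OF fG is_form_fscale[OF Cf_form]])
       (use G00 G10 in \<open>simp_all add: fscale_def Cf_def u_def g_def hh_def\<close>)
  have u0: "u \<noteq> 0" using G10 u_def by simp
  have aa: "a = fscale (c * (u * u)) (fmul (Cf g hh) (Cf g hh))"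
    unfolding h(3) GG fmul_fscale_l fmul_fscale_r fscale_fscale by (simp add: mult_ac)
  have "nrm a = nrm (fmul (Cf g hh) (Cf g hh))" unfolding aa by (rule nrm_fscale) (simp add: h(1) u0)
  also have "\<dots> = fmul (Cf g hh) (Cf g hh)" by (rule nrm_id) (simp add: CC_coeffs)
  finally have "nrm a = fmul (Cf g hh) (Cf g hh)" .
  moreover have "g \<noteq> 0" using G01 u0 by (simp add: g_def)
  moreover have "a 0 2 \<noteq> 0" using c(3) G01 h(1) by simp
  ultimately show ?thesis by blast
qed

lemma irr_Cf:
  assumes "(g::'a::field) \<noteq> 0"
  shows "irred_form 1 1 (Cf g h)"
  unfolding irred_form_def
proof (intro conjI)
  show "is_form 1 1 (Cf g h)" by (rule Cf_form)
  show "Cf g h \<noteq> (\<lambda>i j. 0)"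
  proof
    assume "Cf g h = (\<lambda>i j. 0)" then have "Cf g h 1 0 = 0" by simp
    then show False by (simp add: Cf_def)
  qed
  show "(1::nat, 1::nat) \<noteq> (0, 0)" by simp
  show "\<not> (\<exists>e1 e2 G H. e1 \<le> 1 \<and> e2 \<le> 1 \<and> (e1, e2) \<noteq> (0, 0) \<and> (e1, e2) \<noteq> (1, 1) \<and>
          is_form e1 e2 G \<and> is_form (1 - e1) (1 - e2) H \<and> Cf g h = fmul G H)"
  proof
    assume "\<exists>e1 e2 G H. e1 \<le> 1 \<and> e2 \<le> 1 \<and> (e1, e2) \<noteq> (0, 0) \<and> (e1, e2) \<noteq> (1, 1) \<and>
          is_form e1 e2 G \<and> is_form (1 - e1) (1 - e2) H \<and> Cf g h = fmul G H"
    then obtain e1 e2 G H where hy: "e1 \<le> 1" "e2 \<le> 1" "(e1, e2) \<noteq> (0, 0)" "(e1, e2) \<noteq> (1, 1)"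
      "is_form e1 e2 G" "is_form (1 - e1) (1 - e2) H" "Cf g h = fmul G H" by blast
    have zG: "G i j = 0" if "e1 < i \<or> e2 < j" for i j using isf[OF hy(5) that] .
    have zH: "H i j = 0" if "1 - e1 < i \<or> 1 - e2 < j" for i j using isf[OF hy(6) that] .
    have cf: "Cf g h i j = fmul G H i j" for i j using hy(7) by simp
    have "(e1 = 1 \<and> e2 = 0) \<or> (e1 = 0 \<and> e2 = 1)" using hy(1-4) by auto
    then show False
    proof
      assume e: "e1 = 1 \<and> e2 = 0"
      have "G 0 0 * H 0 0 = 0" "G 0 0 * H 0 1 = g" "G 1 0 * H 0 0 = 1"
        using cf[of 0 0] cf[of 0 1] cf[of 1 0] e zG zH by (simp_all add: fmul_def sum_small Cf_def)
      then show False using assms by auto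
    next
      assume e: "e1 = 0 \<and> e2 = 1"
      have "G 0 0 * H 0 0 = 0" "G 0 1 * H 0 0 = g" "G 0 0 * H 1 0 = 1"
        using cf[of 0 0] cf[of 0 1] cf[of 1 0] e zG zH by (simp_all add: fmul_def sum_small Cf_def)
      then show False using assms by auto
    qed
  qed
qed

lemma case4_rev:
  assumes "(g::'a::field) \<noteq> 0"
  shows "case4 (fmul (Cf g h) (Cf g h))"
  unfolding case4_def
  by (intro exI[of _ 1] exI[of _ "Cf g h"] conjI) (use irr_Cf[OF assms] in simp_all)

lemma CC_sing: "fmul (Cf g h) (Cf g h) \<in> sing_forms"
  unfolding sing_forms_def by (simp add: CC_form CC_coeffs CC_coeffs[unfolded One_nat_def])

lemma CC_nrm: "nrm (fmul (Cf g h) (Cf g h)) = fmul (Cf g h) (Cf g h)"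
  by (rule nrm_id) (simp add: CC_coeffs)

lemma count_4:
  "card (scale_classes {a \<in> (sing_forms :: (nat \<Rightarrow> nat \<Rightarrow> 'a::{field,finite}) set). case4 a})
     = (card (UNIV :: 'a set) - 1) * card (UNIV :: 'a set)"
proof -
  define f :: "'a \<times> 'a \<Rightarrow> nat \<Rightarrow> nat \<Rightarrow> 'a" where "f = (\<lambda>(g, h). fmul (Cf g h) (Cf g h))"
  define D :: "('a \<times> 'a) set" where "D = (UNIV - {0}) \<times> UNIV"
  have "nrm ` {a \<in> (sing_forms :: (nat \<Rightarrow> nat \<Rightarrow> 'a) set). case4 a} = f ` D"
  proof (rule nrm_image_eq)
    show "\<forall>a\<in>{a \<in> sing_forms. case4 a}. nrm a \<in> f ` D"
    proof
      fix a assume "a \<in> {a \<in> (sing_forms :: (nat \<Rightarrow> nat \<Rightarrow> 'a) set). case4 a}"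
      then obtain g h where gh: "g \<noteq> 0" "nrm a = fmul (Cf g h) (Cf g h)" using case4_fw by blast
      then have "(g, h) \<in> D" by (simp add: D_def)
      then have "f (g, h) \<in> f ` D" by (rule imageI)
      then show "nrm a \<in> f ` D" using gh by (simp add: f_def)
    qed
    show "\<forall>b\<in>f ` D. b \<in> {a \<in> sing_forms. case4 a} \<and> nrm b = b"
    proof
      fix b assume "b \<in> f ` D"
      then obtain g h where "b = fmul (Cf g h) (Cf g h)" "g \<noteq> 0" unfolding f_def D_def by auto
      then show "b \<in> {a \<in> sing_forms. case4 a} \<and> nrm b = b"
        using case4_rev[of g h] by (simp add: CC_sing CC_nrm)
    qed
  qed
  moreover have "inj_on f D"
  proof (rule inj_onI)
    fix x y assume "x \<in> D" "y \<in> D" "f x = f y"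
    obtain g h g' h' where xy: "x = (g, h)" "y = (g', h')" by (cases x, cases y) blast
    have e: "fmul (Cf g h) (Cf g h) = fmul (Cf g' h') (Cf g' h')" using \<open>f x = f y\<close> xy by (simp add: f_def)
    have "g * g = g' * g'" "2 * g = 2 * g'" "h * h = h' * h'" "2 * h = 2 * h'"
      using fun_cong[OF fun_cong[OF e, of 0], of 2] fun_cong[OF fun_cong[OF e, of 1], of 1]
        fun_cong[OF fun_cong[OF e, of 2], of 2] fun_cong[OF fun_cong[OF e, of 2], of 1]
      by (simp_all only: CC_coeffs)
    then show "x = y" using xy x_eq_by_sq by blast
  qed
  moreover have "card D = (card (UNIV :: 'a set) - 1) * card (UNIV :: 'a set)"
    unfolding D_def by (simp add: card_cartesian_product card_Diff_subset)
  ultimately show ?thesis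
    using card_classes_sing[of "case4 :: (nat \<Rightarrow> nat \<Rightarrow> 'a) \<Rightarrow> bool"] card_image[of f D] by simp
qed


definition Yq :: "'a::field \<Rightarrow> 'a \<Rightarrow> nat \<Rightarrow> nat \<Rightarrow> 'a" where
  "Yq u v = (\<lambda>i j. if i = 0 then (if j = 0 then 1 else if j = 1 then u else if j = 2 then v else 0) else 0)"

lemma Yq_form: "is_form 0 2 (Yq u v)" by (auto simp: is_form_def Yq_def)

lemma Y1form_eq:
  assumes "is_form 0 1 G" "is_form 0 1 H" "G 0 0 = H 0 0" "G 0 1 = H 0 1"
  shows "G = H"
proof (intro ext)
  fix i j show "G i j = H i j"
  proof (cases "i = 0 \<and> j \<le> 1")
    case True then have "i = 0" "j \<in> {0, 1}" by auto
    then show ?thesis using assms by auto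
  next
    case False then show ?thesis using assms(1,2) unfolding is_form_def by auto
  qed
qed

lemma Y2form_eq:
  assumes "is_form 0 2 G" "is_form 0 2 H" "G 0 0 = H 0 0" "G 0 1 = H 0 1" "G 0 2 = H 0 2"
  shows "G = H"
proof (intro ext)
  fix i j show "G i j = H i j"
  proof (cases "i = 0 \<and> j \<le> 2")
    case True then have "i = 0" "j \<in> {0, 1, 2}" by auto
    then show ?thesis using assms by auto
  next
    case False then show ?thesis using assms(1,2) unfolding is_form_def by auto
  qed
qed

lemma irr_Yq:
  fixes u v :: "'a::field"
  shows "irred_form 0 2 (Yq u v) \<longleftrightarrow> \<not> (\<exists>s t. u = s + t \<and> v = s * t)"
proof
  assume irr: "irred_form 0 2 (Yq u v)"
  show "\<not> (\<exists>s t. u = s + t \<and> v = s * t)"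
  proof
    assume "\<exists>s t. u = s + t \<and> v = s * t"
    then obtain s t where st: "u = s + t" "v = s * t" by blast
    define G :: "nat \<Rightarrow> nat \<Rightarrow> 'a" where "G = (\<lambda>i j. if i = 0 then (if j = 0 then 1 else if j = 1 then s else 0) else 0)"
    define H :: "nat \<Rightarrow> nat \<Rightarrow> 'a" where "H = (\<lambda>i j. if i = 0 then (if j = 0 then 1 else if j = 1 then t else 0) else 0)"
    have fG: "is_form 0 1 G" by (auto simp: is_form_def G_def)
    have fH: "is_form 0 1 H" by (auto simp: is_form_def H_def)
    have fGH: "is_form 0 2 (fmul G H)" using is_form_fmul[OF fG fH] by (simp add: numeral_2_eq_2)
    have "Yq u v = fmul G H"
      by (rule Y2form_eq[OF Yq_form fGH]) (simp_all add: Yq_def fmul_def sum_small G_def H_def st)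
    then show False using irred_no_fact[OF irr, of 0 1 G H] fG fH by simp
  qed
next
  assume nst: "\<not> (\<exists>s t. u = s + t \<and> v = s * t)"
  show "irred_form 0 2 (Yq u v)"
    unfolding irred_form_def
  proof (intro conjI)
    show "is_form 0 2 (Yq u v)" by (rule Yq_form)
    show "Yq u v \<noteq> (\<lambda>i j. 0)"
    proof
      assume "Yq u v = (\<lambda>i j. 0)" then have "Yq u v 0 0 = 0" by simp
      then show False by (simp add: Yq_def)
    qed
    show "(0::nat, 2::nat) \<noteq> (0, 0)" by simp
    show "\<not> (\<exists>e1 e2 G H. e1 \<le> 0 \<and> e2 \<le> 2 \<and> (e1, e2) \<noteq> (0, 0) \<and> (e1, e2) \<noteq> (0, 2) \<and>
          is_form e1 e2 G \<and> is_form (0 - e1) (2 - e2) H \<and> Yq u v = fmul G H)"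
    proof
      assume "\<exists>e1 e2 G H. e1 \<le> 0 \<and> e2 \<le> 2 \<and> (e1, e2) \<noteq> (0, 0) \<and> (e1, e2) \<noteq> (0, 2) \<and>
          is_form e1 e2 G \<and> is_form (0 - e1) (2 - e2) H \<and> Yq u v = fmul G H"
      then obtain e1 e2 G H where hy: "e1 \<le> 0" "e2 \<le> 2" "(e1, e2) \<noteq> (0, 0)" "(e1, e2) \<noteq> (0, 2)"
        "is_form e1 e2 G" "is_form (0 - e1) (2 - e2) H" "Yq u v = fmul G H" by blast
      have e: "e1 = 0" "e2 = 1" using hy(1-4) by auto
      have fG: "is_form 0 1 G" using hy(5) e by simp
      have fH: "is_form 0 1 H" using hy(6) e by simp
      have zG: "G i j = 0" if "0 < i \<or> 1 < j" for i j using isf[OF fG that] .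
      have zH: "H i j = 0" if "0 < i \<or> 1 < j" for i j using isf[OF fH that] .
      have cf: "Yq u v i j = fmul G H i j" for i j using hy(7) by simp
      have c: "G 0 0 * H 0 0 = 1" "G 0 0 * H 0 1 + G 0 1 * H 0 0 = u" "G 0 1 * H 0 1 = v"
        using cf[of 0 0] cf[of 0 1] cf[of 0 2] zG zH by (simp_all add: fmul_def sum_small Yq_def)
      have nz: "G 0 0 \<noteq> 0" "H 0 0 \<noteq> 0" using c(1) by auto
      have "u = G 0 1 / G 0 0 + H 0 1 / H 0 0 \<and> v = (G 0 1 / G 0 0) * (H 0 1 / H 0 0)"
        using c nz by (simp add: field_simps)
      then show False using nst by blast
    qed
  qed
qed

lemma case3_fw:
  assumes "a \<in> sing_forms" "case3 (a :: nat \<Rightarrow> nat \<Rightarrow> 'a::field)"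
  shows "\<exists>u v. nrm a = Xq u v \<and> \<not> (\<exists>s t. u = s + t \<and> v = s * t) \<and> a 0 2 = 0"
proof -
  obtain c A L where h: "c \<noteq> 0" "L \<noteq> (\<lambda>i j. 0)" "a = fscale c (fmul A (fmul L L))"
    "(irred_form 2 0 A \<and> is_form 0 1 L) \<or> (irred_form 0 2 A \<and> is_form 1 0 L)"
    using assms(2) unfolding case3_def by blast
  have a20: "a 2 0 \<noteq> 0" and a00: "a 0 0 = 0" and fa: "is_form 2 2 a"
    using assms(1) by (auto simp: sing_forms_def)
  from h(4) show ?thesis
  proof
    assume hh: "irred_form 2 0 A \<and> is_form 0 1 L"
    have fA: "is_form 2 0 A" using hh by (simp add: irred_form_def)
    have zA: "A i j = 0" if "2 < i \<or> 0 < j" for i j using isf[OF fA that] .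
    have zL: "L i j = 0" if "0 < i \<or> 1 < j" for i j using isf[OF conjunct2[OF hh] that] .
    have "a 0 0 = c * (A 0 0 * (L 0 0 * L 0 0))" "a 2 0 = c * (A 2 0 * (L 0 0 * L 0 0))"
      unfolding h(3) by (simp_all add: fscale_def fmul_def sum_small zA zL)
    then show ?thesis using a00 a20 h(1) irr20_00[OF conjunct1[OF hh]] by simp
  next
    assume hh: "irred_form 0 2 A \<and> is_form 1 0 L"
    have fA: "is_form 0 2 A" using hh by (simp add: irred_form_def)
    have zA: "A i j = 0" if "0 < i \<or> 2 < j" for i j using isf[OF fA that] .
    have zL: "L i j = 0" if "1 < i \<or> 0 < j" for i j using isf[OF conjunct2[OF hh] that] .
    have A0: "A 0 0 \<noteq> 0" using irr20_00 irr02_00[OF conjunct1[OF hh]] by simp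
    have c: "a 0 0 = c * (A 0 0 * (L 0 0 * L 0 0))" "a 2 0 = c * (A 0 0 * (L 1 0 * L 1 0))"
      "a 0 1 = c * (A 0 1 * (L 0 0 * L 0 0))" "a 0 2 = c * (A 0 2 * (L 0 0 * L 0 0))"
      "a 1 0 = c * (A 0 0 * (L 0 0 * L 1 0 + L 1 0 * L 0 0))"
      "a 1 1 = c * (A 0 1 * (L 0 0 * L 1 0 + L 1 0 * L 0 0))"
      "a 1 2 = c * (A 0 2 * (L 0 0 * L 1 0 + L 1 0 * L 0 0))"
      "a 2 1 = c * (A 0 1 * (L 1 0 * L 1 0))" "a 2 2 = c * (A 0 2 * (L 1 0 * L 1 0))"
      unfolding h(3) by (simp_all add: fscale_def fmul_def sum_small zA zL algebra_simps)
    have L0: "L 0 0 = 0" using c(1) a00 h(1) A0 by simp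
    have L1: "L 1 0 \<noteq> 0" using c(2) a20 by auto
    define u where "u = A 0 1 / A 0 0"
    define v where "v = A 0 2 / A 0 0"
    have n: "nrm a = Xq u v" unfolding nrm_def
      by (rule form22_eqI[OF is_form_fscale[OF fa] Xq_form])
         (use c L0 L1 A0 h(1) in \<open>simp_all add: fscale_def Xq_def u_def v_def field_simps\<close>)
    have AY: "A = fscale (A 0 0) (Yq u v)"
      by (rule Y2form_eq[OF fA is_form_fscale[OF Yq_form]])
         (use A0 in \<open>simp_all add: fscale_def Yq_def u_def v_def\<close>)
    have "irred_form 0 2 (Yq u v)" using irred_fscale[OF conjunct1[OF hh] AY A0] .
    then have "\<not> (\<exists>s t. u = s + t \<and> v = s * t)" using irr_Yq by blast
    moreover have "a 0 2 = 0" using c(4) L0 by simp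
    ultimately show ?thesis using n by blast
  qed
qed

lemma case3_rev:
  assumes "\<not> (\<exists>s t. u = s + t \<and> v = s * t)"
  shows "case3 (Xq u v :: nat \<Rightarrow> nat \<Rightarrow> 'a::field)"
proof -
  define L :: "nat \<Rightarrow> nat \<Rightarrow> 'a" where "L = (\<lambda>i j. if i = 1 \<and> j = 0 then 1 else 0)"
  have fL: "is_form 1 0 L" by (auto simp: is_form_def L_def)
  have f2: "is_form 2 2 (fmul (Yq u v) (fmul L L))"
    using is_form_fmul[OF Yq_form is_form_fmul[OF fL fL], of u v] by (simp add: numeral_2_eq_2)
  have e: "Xq u v = fscale 1 (fmul (Yq u v) (fmul L L))"
    unfolding fscale_1
    by (rule form22_eqI[OF Xq_form f2]) (simp_all add: Xq_def fmul_def sum_small L_def Yq_def)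
  have L0: "L \<noteq> (\<lambda>i j. 0)"
  proof
    assume "L = (\<lambda>i j. 0)" then have "L 1 0 = 0" by simp
    then show False by (simp add: L_def)
  qed
  have irr: "irred_form 0 2 (Yq u v)" using irr_Yq assms by blast
  show ?thesis unfolding case3_def
    by (intro exI[of _ 1] exI[of _ "Yq u v"] exI[of _ L] conjI) (use e L0 irr fL in simp_all)
qed


definition ff :: "'a::field \<times> 'a \<Rightarrow> 'a \<times> 'a" where "ff = (\<lambda>(s, t). (s + t, s * t))"

lemma ff_fib:
  assumes "ff (s, t) = ff (s', t')"
  shows "(s', t') = (s, t) \<or> (s', t') = (t, s)"
proof -
  have e: "s + t = s' + t'" "s * t = s' * t'" using assms by (simp_all add: ff_def)
  have "(s' - s) * (s' - t) = s' * s' - (s + t) * s' + s * t" by (simp add: algebra_simps)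
  also have "\<dots> = 0" using e by (simp add: algebra_simps)
  finally have "s' = s \<or> s' = t" by simp
  then show ?thesis using e(1) by auto
qed

lemma card_ff:
  "2 * card (ff ` (UNIV :: ('a::{field,finite} \<times> 'a) set)) = card (UNIV :: 'a set) ^ 2 + card (UNIV :: 'a set)"
proof -
  define q where "q = card (UNIV :: 'a set)"
  define Off :: "('a \<times> 'a) set" where "Off = {x. fst x \<noteq> snd x}"
  define Dg :: "('a \<times> 'a) set" where "Dg = {x. fst x = snd x}"
  have Dg_img: "Dg = (\<lambda>x. (x, x)) ` UNIV" by (auto simp: Dg_def)
  have cDg: "card Dg = q" unfolding Dg_img q_def by (rule card_image) (auto intro: inj_onI)
  have "Off = UNIV - Dg" by (auto simp: Off_def Dg_def)
  then have cOff: "card Off = q ^ 2 - q"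
    using cDg card_Diff_subset[of Dg UNIV] by (simp add: q_def card_cartesian_product[symmetric] power2_eq_square)
  have c1: "card Off = 2 * card (ff ` Off)"
  proof (rule card_fibres2[where s = "\<lambda>(s, t). (t, s)"])
    show "finite Off" by simp
    fix x assume "x \<in> Off" then show "(case x of (s, t) \<Rightarrow> (t, s)) \<in> Off" by (cases x) (simp add: Off_def)
  next
    fix x assume "x \<in> Off" then show "(case x of (s, t) \<Rightarrow> (t, s)) \<noteq> x" by (cases x) (simp add: Off_def)
  next
    fix x assume "x \<in> Off" then show "ff (case x of (s, t) \<Rightarrow> (t, s)) = ff x"
      by (cases x) (simp add: ff_def add.commute mult.commute)
  next
    fix x y assume "ff x = ff y" then show "y = x \<or> y = (case x of (s, t) \<Rightarrow> (t, s))"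
      using ff_fib by (cases x, cases y) auto
  qed
  have c2: "card (ff ` Dg) = q"
  proof -
    have "inj_on ff Dg"
    proof (rule inj_onI)
      fix x y assume "x \<in> Dg" "y \<in> Dg" "ff x = ff y"
      obtain r r2 r' r2' where xy0: "x = (r, r2)" "y = (r', r2')" by (cases x, cases y) blast
      have "r2 = r" "r2' = r'" using xy0 \<open>x \<in> Dg\<close> \<open>y \<in> Dg\<close> unfolding Dg_def by simp_all
      then have xy: "x = (r, r)" "y = (r', r')" using xy0 by simp_all
      have e: "r + r = r' + r'" "r * r = r' * r'" using \<open>ff x = ff y\<close> xy by (simp_all add: ff_def)
      have "2 * r = 2 * r'" using e(1) by (simp only: mult_2)
      then have "r = r'" using x_eq_by_sq[of r r'] e(2) by blast
      then show "x = y" using xy by simp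
    qed
    then show ?thesis using card_image[of ff Dg] cDg by simp
  qed
  have disj: "ff ` Off \<inter> ff ` Dg = {}"
  proof (rule ccontr)
    assume "ff ` Off \<inter> ff ` Dg \<noteq> {}"
    then obtain z where "z \<in> ff ` Off" "z \<in> ff ` Dg" by blast
    then obtain x y where xy: "x \<in> Off" "y \<in> Dg" "z = ff x" "z = ff y" by (meson imageE)
    obtain s t r r2 where xx: "x = (s, t)" "y = (r, r2)" by (cases x, cases y) blast
    have st: "s \<noteq> t" "r2 = r" using xy(1,2) xx unfolding Off_def Dg_def by simp_all
    have "ff (r, r) = ff (s, t)" using xy(3,4) xx st by simp
    then have "(s, t) = (r, r) \<or> (s, t) = (r, r)" by (rule ff_fib)
    then show False using st by simp
  qed
  have "ff ` (UNIV :: ('a \<times> 'a) set) = ff ` Off \<union> ff ` Dg" by (auto simp: Off_def Dg_def)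
  then have "card (ff ` (UNIV :: ('a \<times> 'a) set)) = card (ff ` Off) + card (ff ` Dg)"
    using disj card_Un_disjoint[of "ff ` Off" "ff ` Dg"] by simp
  then have "2 * card (ff ` (UNIV :: ('a \<times> 'a) set)) = (q ^ 2 - q) + 2 * q" using c1 c2 cOff by simp
  moreover have "q \<le> q ^ 2" by (simp add: power2_eq_square)
  ultimately show ?thesis unfolding q_def by simp
qed

lemma count_3:
  "2 * card (scale_classes {a \<in> (sing_forms :: (nat \<Rightarrow> nat \<Rightarrow> 'a::{field,finite}) set). case3 a})
     = card (UNIV :: 'a set) * (card (UNIV :: 'a set) - 1)"
proof -
  define q where "q = card (UNIV :: 'a set)"
  define Irr :: "('a \<times> 'a) set" where "Irr = {(u, v). \<not> (\<exists>s t. u = s + t \<and> v = s * t)}"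
  define f :: "'a \<times> 'a \<Rightarrow> nat \<Rightarrow> nat \<Rightarrow> 'a" where "f = (\<lambda>(u, v). Xq u v)"
  have "nrm ` {a \<in> (sing_forms :: (nat \<Rightarrow> nat \<Rightarrow> 'a) set). case3 a} = f ` Irr"
  proof (rule nrm_image_eq)
    show "\<forall>a\<in>{a \<in> sing_forms. case3 a}. nrm a \<in> f ` Irr"
    proof
      fix a assume "a \<in> {a \<in> (sing_forms :: (nat \<Rightarrow> nat \<Rightarrow> 'a) set). case3 a}"
      then obtain u v where uv: "nrm a = Xq u v" "\<not> (\<exists>s t. u = s + t \<and> v = s * t)"
        using case3_fw by blast
      then have "(u, v) \<in> Irr" by (simp add: Irr_def)
      then have "f (u, v) \<in> f ` Irr" by (rule imageI)
      then show "nrm a \<in> f ` Irr" using uv by (simp add: f_def)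
    qed
    show "\<forall>b\<in>f ` Irr. b \<in> {a \<in> sing_forms. case3 a} \<and> nrm b = b"
    proof
      fix b assume "b \<in> f ` Irr"
      then obtain u v where "b = Xq u v" "\<not> (\<exists>s t. u = s + t \<and> v = s * t)"
        unfolding f_def Irr_def by auto
      then show "b \<in> {a \<in> sing_forms. case3 a} \<and> nrm b = b"
        using case3_rev[of u v] by (simp add: Xq_sing Xq_nrm)
    qed
  qed
  moreover have "inj_on f Irr"
    by (rule inj_onI) (use Xq_inj in \<open>auto simp: f_def\<close>)
  moreover have "Irr = UNIV - ff ` UNIV" by (auto simp: Irr_def ff_def)
  then have "card Irr = q ^ 2 - card (ff ` (UNIV :: ('a \<times> 'a) set))"
    using card_Diff_subset[of "ff ` UNIV" "UNIV :: ('a \<times> 'a) set"]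
    by (simp add: q_def card_cartesian_product[symmetric] power2_eq_square)
  ultimately have "card (scale_classes {a \<in> (sing_forms :: (nat \<Rightarrow> nat \<Rightarrow> 'a) set). case3 a})
      = q ^ 2 - card (ff ` (UNIV :: ('a \<times> 'a) set))"
    using card_classes_sing[of "case3 :: (nat \<Rightarrow> nat \<Rightarrow> 'a) \<Rightarrow> bool"] card_image[of f Irr] by simp
  moreover have "2 * card (ff ` (UNIV :: ('a \<times> 'a) set)) = q ^ 2 + q" using card_ff unfolding q_def .
  moreover have "q ^ 2 - q = q * (q - 1)" by (simp add: power2_eq_square diff_mult_distrib2)
  ultimately show ?thesis unfolding q_def by linarith
qed

definition mk5 :: "'a::field \<times> 'a \<times> 'a \<times> 'a \<times> 'a \<Rightarrow> nat \<Rightarrow> nat \<Rightarrow> 'a" where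
  "mk5 = (\<lambda>(x1, x2, x3, x4, x5) i j. if i = 0 \<and> j = 2 then x1 else if i = 1 \<and> j = 1 then x2
     else if i = 1 \<and> j = 2 then x3 else if i = 2 \<and> j = 0 then 1 else if i = 2 \<and> j = 1 then x4
     else if i = 2 \<and> j = 2 then x5 else 0)"

lemma count_all:
  "card (scale_classes (sing_forms :: (nat \<Rightarrow> nat \<Rightarrow> 'a::{field,finite}) set)) = card (UNIV :: 'a set) ^ 5"
proof -
  have im: "nrm ` (sing_forms :: (nat \<Rightarrow> nat \<Rightarrow> 'a) set) = mk5 ` UNIV"
  proof (rule nrm_image_eq)
    show "\<forall>a\<in>(sing_forms :: (nat \<Rightarrow> nat \<Rightarrow> 'a) set). nrm a \<in> range mk5"
    proof
      fix a :: "nat \<Rightarrow> nat \<Rightarrow> 'a" assume a: "a \<in> sing_forms"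
      then have fa: "is_form 2 2 a" and a0: "a 0 0 = 0" "a 0 1 = 0" "a 1 0 = 0" "a 2 0 \<noteq> 0"
        by (auto simp: sing_forms_def)
      have fmk: "is_form 2 2 (mk5 x)" for x by (cases x) (auto simp: is_form_def mk5_def)
      have "nrm a = mk5 (nrm a 0 2, nrm a 1 1, nrm a 1 2, nrm a 2 1, nrm a 2 2)"
        unfolding nrm_def
        by (rule form22_eqI[OF is_form_fscale[OF fa] fmk]) (use a0 in \<open>simp_all add: mk5_def fscale_def\<close>)
      then show "nrm a \<in> range mk5" by simp
    qed
    show "\<forall>b\<in>range (mk5 :: _ \<Rightarrow> nat \<Rightarrow> nat \<Rightarrow> 'a). b \<in> sing_forms \<and> nrm b = b"
    proof
      fix b assume "b \<in> range (mk5 :: _ \<Rightarrow> nat \<Rightarrow> nat \<Rightarrow> 'a)"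
      then obtain x1 x2 x3 x4 x5 where b: "b = mk5 (x1, x2, x3, x4, x5)" by (metis prod_cases5 rangeE)
      have "b \<in> sing_forms" unfolding b sing_forms_def by (auto simp: is_form_def mk5_def)
      moreover have "nrm b = b" by (rule nrm_id) (simp add: b mk5_def)
      ultimately show "b \<in> sing_forms \<and> nrm b = b" by simp
    qed
  qed
  have inj: "inj (mk5 :: _ \<Rightarrow> nat \<Rightarrow> nat \<Rightarrow> 'a)"
  proof (rule injI)
    fix x y :: "'a \<times> 'a \<times> 'a \<times> 'a \<times> 'a"
    assume e: "mk5 x = mk5 y"
    obtain x1 x2 x3 x4 x5 where x: "x = (x1, x2, x3, x4, x5)" by (cases x) auto
    obtain y1 y2 y3 y4 y5 where y: "y = (y1, y2, y3, y4, y5)" by (cases y) auto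
    have "mk5 x 0 2 = mk5 y 0 2" "mk5 x 1 1 = mk5 y 1 1" "mk5 x 1 2 = mk5 y 1 2"
      "mk5 x 2 1 = mk5 y 2 1" "mk5 x 2 2 = mk5 y 2 2" using e by simp_all
    then show "x = y" by (simp add: x y mk5_def)
  qed
  have cU: "card (UNIV :: ('a \<times> 'a \<times> 'a \<times> 'a \<times> 'a) set) = card (UNIV :: 'a set) ^ 5"
  proof -
    have "(UNIV :: ('a \<times> 'a \<times> 'a \<times> 'a \<times> 'a) set) = UNIV \<times> UNIV \<times> UNIV \<times> UNIV \<times> UNIV"
      by simp
    then have "card (UNIV :: ('a \<times> 'a \<times> 'a \<times> 'a \<times> 'a) set)
       = card (UNIV :: 'a set) * (card (UNIV :: 'a set) * (card (UNIV :: 'a set) * (card (UNIV :: 'a set) * card (UNIV :: 'a set))))"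
      by (metis card_cartesian_product)
    then show ?thesis by (simp add: numeral_eq_Suc)
  qed
  have "card (scale_classes (sing_forms :: (nat \<Rightarrow> nat \<Rightarrow> 'a) set)) = card (nrm ` (sing_forms :: (nat \<Rightarrow> nat \<Rightarrow> 'a) set))"
    by (rule card_classes) (simp add: sing_forms_def)
  also have "\<dots> = card (range (mk5 :: _ \<Rightarrow> nat \<Rightarrow> nat \<Rightarrow> 'a))" using im by simp
  also have "\<dots> = card (UNIV :: ('a \<times> 'a \<times> 'a \<times> 'a \<times> 'a) set)" by (rule card_image[OF inj])
  finally show ?thesis using cU by simp
qed


theorem lemma4p8:
  fixes p :: nat
    and emb :: "'k::{field,finite} \<Rightarrow> 'K::{field,finite}"
  assumes "prime p"
    and "card (UNIV :: 'k set) = p"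
    and "card (UNIV :: 'K set) = p ^ 2"
    and "\<forall>x y. emb (x + y) = emb x + emb y"
    and "\<forall>x y. emb (x * y) = emb x * emb y"
    and "emb 1 = 1"
  shows "card (scale_classes (sing_forms :: (nat \<Rightarrow> nat \<Rightarrow> 'k) set)) = p ^ 5
    \<and> 2 * card (scale_classes {a \<in> sing_forms. case1i p emb a}) = p ^ 3 * (p - 1)
    \<and> card (scale_classes {a \<in> sing_forms. case1ii p emb a}) = 0
    \<and> 2 * card (scale_classes {a \<in> sing_forms. case1iii p emb a}) = p * (p - 1) ^ 2
    \<and> card (scale_classes {a \<in> (sing_forms :: (nat \<Rightarrow> nat \<Rightarrow> 'k) set). case2 a}) = 0
    \<and> 2 * card (scale_classes {a \<in> (sing_forms :: (nat \<Rightarrow> nat \<Rightarrow> 'k) set). case3 a}) = p * (p - 1)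
    \<and> card (scale_classes {a \<in> (sing_forms :: (nat \<Rightarrow> nat \<Rightarrow> 'k) set). case4 a}) = p * (p - 1)
    \<and> card (scale_classes {a \<in> (sing_forms :: (nat \<Rightarrow> nat \<Rightarrow> 'k) set). case5 a}) = p
    \<and> (\<forall>a \<in> sing_forms. (case1i p emb a \<or> case1iii p emb a \<or> case4 a) \<longrightarrow> a 0 2 \<noteq> 0)
    \<and> (\<forall>a \<in> (sing_forms :: (nat \<Rightarrow> nat \<Rightarrow> 'k) set). (case3 a \<or> case5 a) \<longrightarrow> a 0 2 = 0)"
proof -
  interpret ffs p emb using assms by unfold_locales
  have c0: "card (scale_classes (sing_forms :: (nat \<Rightarrow> nat \<Rightarrow> 'k) set)) = p ^ 5"
    using count_all[where 'a='k] assms(2) by simp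
  have c2: "card (scale_classes {a \<in> (sing_forms :: (nat \<Rightarrow> nat \<Rightarrow> 'k) set). case2 a}) = 0"
  proof -
    have "{a \<in> (sing_forms :: (nat \<Rightarrow> nat \<Rightarrow> 'k) set). case2 a} = {}" using case2_none by blast
    then show ?thesis unfolding scale_classes_def by (simp only: image_empty card.empty)
  qed
  have c3: "2 * card (scale_classes {a \<in> (sing_forms :: (nat \<Rightarrow> nat \<Rightarrow> 'k) set). case3 a}) = p * (p - 1)"
    using count_3[where 'a='k] assms(2) by simp
  have c4: "card (scale_classes {a \<in> (sing_forms :: (nat \<Rightarrow> nat \<Rightarrow> 'k) set). case4 a}) = p * (p - 1)"
    using count_4[where 'a='k] assms(2) by (simp add: mult.commute)
  have c5: "card (scale_classes {a \<in> (sing_forms :: (nat \<Rightarrow> nat \<Rightarrow> 'k) set). case5 a}) = p"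
    using count_5[where 'a='k] assms(2) by simp
  have n1: "\<forall>a \<in> sing_forms. (case1i p emb a \<or> case1iii p emb a \<or> case4 a) \<longrightarrow> a 0 2 \<noteq> 0"
  proof (intro ballI impI)
    fix a :: "nat \<Rightarrow> nat \<Rightarrow> 'k"
    assume a: "a \<in> sing_forms" and "case1i p emb a \<or> case1iii p emb a \<or> case4 a"
    then consider "case1i p emb a" | "case1iii p emb a" | "case4 a" by blast
    then show "a 0 2 \<noteq> 0"
    proof cases
      case 1 then show ?thesis using case1i_fw[OF a] by blast
    next
      case 2 then show ?thesis using case1iii_fw[OF a] by blast
    next
      case 3 then show ?thesis using case4_fw[OF a] by blast
    qed
  qed
  have n2: "\<forall>a \<in> (sing_forms :: (nat \<Rightarrow> nat \<Rightarrow> 'k) set). (case3 a \<or> case5 a) \<longrightarrow> a 0 2 = 0"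
  proof (intro ballI impI)
    fix a :: "nat \<Rightarrow> nat \<Rightarrow> 'k"
    assume a: "a \<in> sing_forms" and "case3 a \<or> case5 a"
    then show "a 0 2 = 0" using case3_fw[OF a] case5_fw[OF a] by blast
  qed
  show ?thesis using c0 count_1i count_1ii count_1iii c2 c3 c4 c5 n1 n2 by simp
qed


end
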